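(* Let $f\colon[0,1]\to\mathbb{R}$ be absolutely continuous. For natural $n$ let $x_n:=\sum_{k=1}^{n-1} f\big(\tfrac kn\big)$ and $y_n:=x_{n+1}-x_n$. Then $\lim_{n\to\infty} y_n=\int_0^1 f(x)\,dx$. *)

theory Defs
  imports "HOL-Analysis.Analysis"
begin

definition abs_continuous_on :: "real \<Rightarrow> real \<Rightarrow> (real \<Rightarrow> real) \<Rightarrow> bool" where
  "abs_continuous_on u v f \<longleftrightarrow>
     (\<forall>e>0. \<exists>d>0. \<forall>(n::nat) (a::nat \<Rightarrow> real) (b::nat \<Rightarrow> real).
        (\<forall>i<n. u \<le> a i \<and> a i \<le> b i \<and> b i \<le> v) \<longrightarrow>
        (\<forall>i<n. \<forall>j<n. i \<noteq> j \<longrightarrow> b i \<le> a j \<or> b j \<le> a i) \<longrightarrow>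
        (\<Sum>i<n. b i - a i) < d \<longrightarrow>
        (\<Sum>i<n. \<bar>f (b i) - f (a i)\<bar>) < e)"

definition riemann_x :: "(real \<Rightarrow> real) \<Rightarrow> nat \<Rightarrow> real" where
  "riemann_x f n = (\<Sum>k=1..<n. f (real k / real n))"

end

theory Submission
  imports Defs
begin

definition fam :: "real \<Rightarrow> real \<Rightarrow> (real \<times> real) set \<Rightarrow> bool" where
  "fam u v S \<longleftrightarrow> finite S \<and> (\<forall>p\<in>S. u \<le> fst p \<and> fst p < snd p \<and> snd p \<le> v) \<and>
     (\<forall>p\<in>S. \<forall>q\<in>S. p \<noteq> q \<longrightarrow> snd p \<le> fst q \<or> snd q \<le> fst p)"

definition sv :: "(real \<Rightarrow> real) \<Rightarrow> (real \<times> real) set \<Rightarrow> real" where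
  "sv f S = (\<Sum>p\<in>S. \<bar>f (snd p) - f (fst p)\<bar>)"

definition len :: "(real \<times> real) set \<Rightarrow> real" where
  "len S = (\<Sum>p\<in>S. snd p - fst p)"

lemma fam_len_measure:
  assumes "fam u v S"
  shows "len S = measure lebesgue (\<Union>p\<in>S. {fst p..snd p})"
proof -
  have fin: "finite S" using assms by (simp add: fam_def)
  have "measure lebesgue (\<Union>p\<in>S. {fst p..snd p}) = (\<Sum>p\<in>S. measure lebesgue {fst p..snd p})"
  proof (rule measure_negligible_finite_Union_image[OF fin])
    show "pairwise (\<lambda>p q. negligible ({fst p..snd p} \<inter> {fst q..snd q})) S"
    unfolding pairwise_def
    proof (intro ballI impI)
      fix p q assume "p \<in> S" "q \<in> S" "p \<noteq> q"
      then have "snd p \<le> fst q \<or> snd q \<le> fst p" using assms unfolding fam_def by blast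
      then have "{fst p..snd p} \<inter> {fst q..snd q} \<subseteq> {snd p, fst p}" by auto
      then show "negligible ({fst p..snd p} \<inter> {fst q..snd q})"
        by (meson finite.emptyI finite_insert negligible_finite negligible_subset)
    qed
  qed auto
  also have "\<dots> = len S"
    unfolding len_def
    by (rule sum.cong) (use assms in \<open>auto simp: fam_def\<close>)
  finally show ?thesis by simp
qed

lemma fam_len_le:
  assumes "fam u v S" "u \<le> v"
  shows "len S \<le> v - u"
proof (cases "S = {}")
  case True
  then show ?thesis using assms by (simp add: len_def)
next
  case False
  then obtain p where "p \<in> S" by auto
  then have uv: "u \<le> v" using assms by (force simp: fam_def)
  have "len S = measure lebesgue (\<Union>p\<in>S. {fst p..snd p})" by (rule fam_len_measure[OF assms(1)])
  also have "\<dots> \<le> measure lebesgue {u..v}"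
    by (rule measure_mono_fmeasurable) (use assms in \<open>auto simp: fam_def\<close>)
  also have "\<dots> = v - u" using uv by simp
  finally show ?thesis .
qed


lemma ac_set:
  assumes "abs_continuous_on 0 1 f" "e > 0"
  shows "\<exists>d>0. \<forall>S. fam 0 1 S \<longrightarrow> len S < d \<longrightarrow> sv f S < e"
proof -
  obtain d where d: "d > 0" and H: "\<forall>(n::nat) (a::nat \<Rightarrow> real) (b::nat \<Rightarrow> real).
        (\<forall>i<n. 0 \<le> a i \<and> a i \<le> b i \<and> b i \<le> 1) \<longrightarrow>
        (\<forall>i<n. \<forall>j<n. i \<noteq> j \<longrightarrow> b i \<le> a j \<or> b j \<le> a i) \<longrightarrow>
        (\<Sum>i<n. b i - a i) < d \<longrightarrow>
        (\<Sum>i<n. \<bar>f (b i) - f (a i)\<bar>) < e"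
    using assms unfolding abs_continuous_on_def by blast
  have "\<forall>S. fam 0 1 S \<longrightarrow> len S < d \<longrightarrow> sv f S < e"
  proof (intro allI impI)
    fix S assume S: "fam 0 1 S" "len S < d"
    then have "finite S" by (simp add: fam_def)
    then obtain h where bij: "bij_betw h {0..<card S} S" using ex_bij_betw_nat_finite by blast
    then have bij': "bij_betw h {..<card S} S" by (simp add: atLeast0LessThan)
    define a where "a = (\<lambda>i. fst (h i))"
    define b where "b = (\<lambda>i. snd (h i))"
    have hin: "\<And>i. i < card S \<Longrightarrow> h i \<in> S" using bij' by (auto dest: bij_betwE)
    have 1: "\<forall>i<card S. 0 \<le> a i \<and> a i \<le> b i \<and> b i \<le> 1"
      using S(1) hin unfolding a_def b_def fam_def by (meson less_imp_le)
    have 2: "\<forall>i<card S. \<forall>j<card S. i \<noteq> j \<longrightarrow> b i \<le> a j \<or> b j \<le> a i"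
    proof (intro allI impI)
      fix i j assume "i < card S" "j < card S" "i \<noteq> j"
      then have "h i \<noteq> h j" using bij' by (metis bij_betw_imp_inj_on inj_onD lessThan_iff)
      then show "b i \<le> a j \<or> b j \<le> a i"
        using S(1) hin \<open>i < card S\<close> \<open>j < card S\<close> unfolding a_def b_def fam_def by blast
    qed
    have 3: "(\<Sum>i<card S. b i - a i) = len S"
      unfolding len_def a_def b_def using sum.reindex_bij_betw[OF bij', of "\<lambda>p. snd p - fst p"] by simp
    have 4: "(\<Sum>i<card S. \<bar>f (b i) - f (a i)\<bar>) = sv f S"
      unfolding sv_def a_def b_def using sum.reindex_bij_betw[OF bij', of "\<lambda>p. \<bar>f (snd p) - f (fst p)\<bar>"] by simp
    show "sv f S < e" using H[THEN spec[of _ "card S"], THEN spec[of _ a], THEN spec[of _ b]] 1 2 3 4 S(2) by simp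
  qed
  then show ?thesis using d by blast
qed

lemma fam_mono: "fam u v S \<Longrightarrow> u' \<le> u \<Longrightarrow> v \<le> v' \<Longrightarrow> fam u' v' S"
  unfolding fam_def by force

lemma fam_el: "fam u v S \<Longrightarrow> p \<in> S \<Longrightarrow> u \<le> fst p \<and> fst p < snd p \<and> snd p \<le> v"
  unfolding fam_def by blast

lemma fam_empty: "fam u v {}"
  unfolding fam_def by simp

lemma fam_split:
  assumes S: "fam u w S" and uv: "u \<le> v" and vw: "v \<le> w"
  shows "\<exists>S1 S2. fam u v S1 \<and> fam v w S2 \<and> sv f S \<le> sv f S1 + sv f S2"
proof -
  have fin: "finite S" using S by (simp add: fam_def)
  define P1 where "P1 = {p\<in>S. fst p < v}"
  define P2 where "P2 = {p\<in>S. v < snd p}"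
  define m1 where "m1 = (\<lambda>p::real\<times>real. (fst p, min (snd p) v))"
  define m2 where "m2 = (\<lambda>p::real\<times>real. (max (fst p) v, snd p))"
  have no: "\<And>p q. p \<in> S \<Longrightarrow> q \<in> S \<Longrightarrow> p \<noteq> q \<Longrightarrow> snd p \<le> fst q \<or> snd q \<le> fst p"
    using S unfolding fam_def by blast
  have el: "\<And>p. p \<in> S \<Longrightarrow> u \<le> fst p \<and> fst p < snd p \<and> snd p \<le> w"
    using S unfolding fam_def by blast
  have inj1: "inj_on m1 P1"
  proof (rule inj_onI)
    fix p q assume "p \<in> P1" "q \<in> P1" "m1 p = m1 q"
    then have "fst p = fst q" "p \<in> S" "q \<in> S" by (auto simp: m1_def P1_def)
    then show "p = q" using no[of p q] el[of p] el[of q] by force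
  qed
  have inj2: "inj_on m2 P2"
  proof (rule inj_onI)
    fix p q assume "p \<in> P2" "q \<in> P2" "m2 p = m2 q"
    then have "snd p = snd q" "p \<in> S" "q \<in> S" by (auto simp: m2_def P2_def)
    then show "p = q" using no[of p q] el[of p] el[of q] by force
  qed
  have f1: "fam u v (m1 ` P1)"
    unfolding fam_def
  proof (intro conjI ballI impI)
    show "finite (m1 ` P1)" using fin by (simp add: P1_def)
  next
    fix p assume "p \<in> m1 ` P1"
    then show "u \<le> fst p" "fst p < snd p" "snd p \<le> v" using el by (auto simp: m1_def P1_def)
  next
    fix p q assume "p \<in> m1 ` P1" "q \<in> m1 ` P1" "p \<noteq> q"
    then obtain p' q' where "p' \<in> P1" "q' \<in> P1" "p = m1 p'" "q = m1 q'" "p' \<noteq> q'" by auto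
    then show "snd p \<le> fst q \<or> snd q \<le> fst p"
      using no[of p' q'] by (auto simp: m1_def P1_def)
  qed
  have f2: "fam v w (m2 ` P2)"
    unfolding fam_def
  proof (intro conjI ballI impI)
    show "finite (m2 ` P2)" using fin by (simp add: P2_def)
  next
    fix p assume "p \<in> m2 ` P2"
    then show "v \<le> fst p" "fst p < snd p" "snd p \<le> w" using el by (auto simp: m2_def P2_def)
  next
    fix p q assume "p \<in> m2 ` P2" "q \<in> m2 ` P2" "p \<noteq> q"
    then obtain p' q' where "p' \<in> P2" "q' \<in> P2" "p = m2 p'" "q = m2 q'" "p' \<noteq> q'" by auto
    then show "snd p \<le> fst q \<or> snd q \<le> fst p"
      using no[of p' q'] by (auto simp: m2_def P2_def)
  qed
  have "sv f S \<le> (\<Sum>p\<in>S. (if fst p < v then \<bar>f (min (snd p) v) - f (fst p)\<bar> else 0)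
       + (if v < snd p then \<bar>f (snd p) - f (max (fst p) v)\<bar> else 0))"
    unfolding sv_def
  proof (rule sum_mono)
    fix p assume "p \<in> S"
    then have "fst p < snd p" using el by blast
    show "\<bar>f (snd p) - f (fst p)\<bar> \<le> (if fst p < v then \<bar>f (min (snd p) v) - f (fst p)\<bar> else 0)
       + (if v < snd p then \<bar>f (snd p) - f (max (fst p) v)\<bar> else 0)"
    proof (cases "snd p \<le> v")
      case True
      then show ?thesis using \<open>fst p < snd p\<close> by (auto simp: min_def)
    next
      case False
      show ?thesis
      proof (cases "v \<le> fst p")
        case True
        then show ?thesis using False by (auto simp: max_def)
      next
        case False2: False
        then show ?thesis using False by (auto simp: max_def min_def)
      qed
    qed
  qed
  also have "\<dots> = (\<Sum>p\<in>P1. \<bar>f (min (snd p) v) - f (fst p)\<bar>) + (\<Sum>p\<in>P2. \<bar>f (snd p) - f (max (fst p) v)\<bar>)"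
    unfolding P1_def P2_def sum.distrib using fin by (simp add: sum.inter_filter)
  also have "\<dots> = sv f (m1 ` P1) + sv f (m2 ` P2)"
    unfolding sv_def by (subst sum.reindex[OF inj1], subst sum.reindex[OF inj2]) (simp add: m1_def m2_def)
  finally show ?thesis using f1 f2 by blast
qed

lemma sv_bound:
  assumes "abs_continuous_on 0 1 f"
  shows "\<exists>B. \<forall>S. fam 0 1 S \<longrightarrow> sv f S \<le> B"
proof -
  obtain d where d: "d > 0" "\<And>S. fam 0 1 S \<Longrightarrow> len S < d \<Longrightarrow> sv f S < 1"
    using ac_set[OF assms, of 1] by auto
  obtain N :: nat where N: "1 / real N < d" "N > 0"
    by (metis d(1) gr0I inverse_eq_divide of_nat_0 real_arch_inverse)
  have "\<forall>S. fam 0 (real m / real N) S \<longrightarrow> sv f S \<le> real m" if "m \<le> N" for m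
    using that
  proof (induction m)
    case 0
    show ?case
    proof (intro allI impI)
      fix S assume "fam 0 (real 0 / real N) S"
      then have "S = {}" unfolding fam_def by force
      then show "sv f S \<le> real 0" by (simp add: sv_def)
    qed
  next
    case (Suc m)
    show ?case
    proof (intro allI impI)
      fix S assume S: "fam 0 (real (Suc m) / real N) S"
      have le: "0 \<le> real m / real N" "real m / real N \<le> real (Suc m) / real N"
        using N by (auto simp: divide_right_mono)
      obtain S1 S2 where S12: "fam 0 (real m / real N) S1" "fam (real m / real N) (real (Suc m) / real N) S2"
        "sv f S \<le> sv f S1 + sv f S2"
        using fam_split[OF S le] by blast
      have "sv f S1 \<le> real m" using Suc S12 by simp
      have "real (Suc m) / real N \<le> 1" using Suc.prems N by simp
      then have "fam 0 1 S2" using S12(2) le by (auto intro: fam_mono)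
      moreover have "len S2 \<le> real (Suc m) / real N - real m / real N"
        using fam_len_le[OF S12(2) le(2)] .
      moreover have "real (Suc m) / real N - real m / real N = 1 / real N"
        by (simp add: diff_divide_distrib[symmetric])
      ultimately have "sv f S2 < 1" using d(2) N(1) by simp
      then show "sv f S \<le> real (Suc m)" using S12(3) \<open>sv f S1 \<le> real m\<close> by simp
    qed
  qed
  then have "\<forall>S. fam 0 1 S \<longrightarrow> sv f S \<le> real N" using N(2) by simp
  then show ?thesis by blast
qed

definition Var :: "(real \<Rightarrow> real) \<Rightarrow> real \<Rightarrow> real \<Rightarrow> real" where
  "Var f u v = (SUP S\<in>{S. fam u v S}. sv f S)"

lemma Var_ge:
  assumes "abs_continuous_on 0 1 f" "fam u v S" "0 \<le> u" "v \<le> 1"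
  shows "sv f S \<le> Var f u v"
proof -
  obtain B where B: "\<And>S. fam 0 1 S \<Longrightarrow> sv f S \<le> B" using sv_bound[OF assms(1)] by blast
  have "bdd_above (sv f ` {S. fam u v S})"
    using B assms(3,4) by (auto intro!: bdd_aboveI2 intro: fam_mono)
  then show ?thesis unfolding Var_def using assms(2) by (auto intro: cSUP_upper)
qed

lemma Var_le:
  assumes "\<And>S. fam u v S \<Longrightarrow> sv f S \<le> c"
  shows "Var f u v \<le> c"
  unfolding Var_def using assms fam_empty by (auto intro!: cSUP_least)

lemma Var_approx:
  assumes "abs_continuous_on 0 1 f" "0 \<le> u" "v \<le> 1" "\<eta> > 0"
  shows "\<exists>S. fam u v S \<and> Var f u v - \<eta> < sv f S"
proof -
  obtain B where B: "\<And>S. fam 0 1 S \<Longrightarrow> sv f S \<le> B" using sv_bound[OF assms(1)] by blast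
  have bdd: "bdd_above (sv f ` {S. fam u v S})"
    using B assms(2,3) by (auto intro!: bdd_aboveI2 intro: fam_mono)
  have "Var f u v - \<eta> < Var f u v" using assms by simp
  then show ?thesis unfolding Var_def using less_cSUP_iff[OF _ bdd, of "Var f u v - \<eta>"] fam_empty
    by (auto simp: Var_def)
qed

lemma V_incr:
  assumes ac: "abs_continuous_on 0 1 f" and xy: "0 \<le> x" "x \<le> y" "y \<le> 1"
  shows "Var f 0 x + \<bar>f y - f x\<bar> \<le> Var f 0 y"
proof (cases "x = y")
  case True then show ?thesis by simp
next
  case False
  then have xy': "x < y" using xy by simp
  have "Var f 0 x \<le> Var f 0 y - \<bar>f y - f x\<bar>"
  proof (rule Var_le)
    fix S assume S: "fam 0 x S"
    have nin: "(x, y) \<notin> S" using S xy' unfolding fam_def by force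
    have F: "fam 0 y (insert (x, y) S)"
      using S xy xy' unfolding fam_def by force
    have "sv f (insert (x, y) S) = \<bar>f y - f x\<bar> + sv f S"
      using nin S unfolding sv_def fam_def by simp
    moreover have "sv f (insert (x, y) S) \<le> Var f 0 y" using Var_ge[OF ac F] xy by simp
    ultimately show "sv f S \<le> Var f 0 y - \<bar>f y - f x\<bar>" by simp
  qed
  then show ?thesis by simp
qed

lemma V_sub:
  assumes ac: "abs_continuous_on 0 1 f" and xy: "0 \<le> x" "x \<le> y" "y \<le> 1"
  shows "Var f 0 y \<le> Var f 0 x + Var f x y"
proof (rule Var_le)
  fix S assume S: "fam 0 y S"
  obtain S1 S2 where S12: "fam 0 x S1" "fam x y S2" "sv f S \<le> sv f S1 + sv f S2"
    using fam_split[OF S xy(1,2)] by blast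
  have "sv f S1 \<le> Var f 0 x" using Var_ge[OF ac S12(1)] xy by simp
  moreover have "sv f S2 \<le> Var f x y" using Var_ge[OF ac S12(2)] xy by simp
  ultimately show "sv f S \<le> Var f 0 x + Var f x y" using S12(3) by simp
qed

lemma Var_sum_ac:
  assumes ac: "abs_continuous_on 0 1 f" and e: "e > 0"
  shows "\<exists>d>0. \<forall>T. fam 0 1 T \<longrightarrow> len T < d \<longrightarrow> (\<Sum>p\<in>T. Var f (fst p) (snd p)) \<le> e"
proof -
  obtain d where d: "d > 0" "\<And>S. fam 0 1 S \<Longrightarrow> len S < d \<Longrightarrow> sv f S < e"
    using ac_set[OF ac e] by auto
  have "(\<Sum>p\<in>T. Var f (fst p) (snd p)) \<le> e" if T: "fam 0 1 T" "len T < d" for T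
  proof (rule field_le_epsilon)
    fix \<eta> :: real assume "\<eta> > 0"
    define \<eta>' where "\<eta>' = \<eta> / (real (card T) + 1)"
    have "\<eta>' > 0" using \<open>\<eta> > 0\<close> by (simp add: \<eta>'_def)
    have fin: "finite T" using T by (simp add: fam_def)
    have el: "\<And>p. p \<in> T \<Longrightarrow> 0 \<le> fst p \<and> fst p < snd p \<and> snd p \<le> 1"
      using T unfolding fam_def by blast
    have no: "\<And>p q. p \<in> T \<Longrightarrow> q \<in> T \<Longrightarrow> p \<noteq> q \<Longrightarrow> snd p \<le> fst q \<or> snd q \<le> fst p"
      using T unfolding fam_def by blast
    have "\<forall>p\<in>T. \<exists>S. fam (fst p) (snd p) S \<and> Var f (fst p) (snd p) - \<eta>' < sv f S"
      using Var_approx[OF ac _ _ \<open>\<eta>' > 0\<close>] el by blast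
    then obtain Sp where Sp: "\<And>p. p \<in> T \<Longrightarrow> fam (fst p) (snd p) (Sp p) \<and> Var f (fst p) (snd p) - \<eta>' < sv f (Sp p)"
      using bchoice[of T] by metis
    define U where "U = \<Union>(Sp ` T)"
    have finS: "\<forall>p\<in>T. finite (Sp p)" using Sp by (simp add: fam_def)
    have elS: "\<And>p q. p \<in> T \<Longrightarrow> q \<in> Sp p \<Longrightarrow> fst p \<le> fst q \<and> fst q < snd q \<and> snd q \<le> snd p"
      using Sp unfolding fam_def by blast
    have disj: "\<forall>p\<in>T. \<forall>q\<in>T. p \<noteq> q \<longrightarrow> Sp p \<inter> Sp q = {}"
    proof (intro ballI impI)
      fix p q assume pq: "p \<in> T" "q \<in> T" "p \<noteq> q"
      show "Sp p \<inter> Sp q = {}"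
      proof (rule ccontr)
        assume "Sp p \<inter> Sp q \<noteq> {}"
        then obtain r where r: "r \<in> Sp p" "r \<in> Sp q" by auto
        have "fst p \<le> fst r \<and> fst r < snd r \<and> snd r \<le> snd p" using elS[OF pq(1) r(1)] .
        moreover have "fst q \<le> fst r \<and> fst r < snd r \<and> snd r \<le> snd q" using elS[OF pq(2) r(2)] .
        moreover have "snd p \<le> fst q \<or> snd q \<le> fst p" using no[OF pq] .
        ultimately show False by auto
      qed
    qed
    have famU: "fam 0 1 U"
      unfolding fam_def U_def
    proof (intro conjI ballI impI)
      show "finite (\<Union> (Sp ` T))" using fin finS by simp
    next
      fix r assume "r \<in> \<Union> (Sp ` T)"
      then obtain p where p: "p \<in> T" "r \<in> Sp p" by auto
      have "fst p \<le> fst r \<and> fst r < snd r \<and> snd r \<le> snd p" using elS[OF p] .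
      moreover have "0 \<le> fst p \<and> fst p < snd p \<and> snd p \<le> 1" using el[OF p(1)] .
      ultimately show "0 \<le> fst r" "fst r < snd r" "snd r \<le> 1" by linarith+
    next
      fix r1 r2 assume "r1 \<in> \<Union> (Sp ` T)" "r2 \<in> \<Union> (Sp ` T)" "r1 \<noteq> r2"
      then obtain p1 p2 where p: "p1 \<in> T" "r1 \<in> Sp p1" "p2 \<in> T" "r2 \<in> Sp p2" by auto
      show "snd r1 \<le> fst r2 \<or> snd r2 \<le> fst r1"
      proof (cases "p1 = p2")
        case True
        have "fam (fst p1) (snd p1) (Sp p1)" using Sp p(1) by blast
        then show ?thesis using p True \<open>r1 \<noteq> r2\<close> unfolding fam_def by blast
      next
        case False
        have "fst p1 \<le> fst r1 \<and> fst r1 < snd r1 \<and> snd r1 \<le> snd p1" using elS[OF p(1,2)] .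
        moreover have "fst p2 \<le> fst r2 \<and> fst r2 < snd r2 \<and> snd r2 \<le> snd p2" using elS[OF p(3,4)] .
        moreover have "snd p1 \<le> fst p2 \<or> snd p2 \<le> fst p1" using no[OF p(1) p(3) False] .
        ultimately show ?thesis by auto
      qed
    qed
    have "len U = (\<Sum>p\<in>T. len (Sp p))"
      unfolding U_def len_def by (rule sum.UNION_disjoint[OF fin finS disj])
    also have "\<dots> \<le> (\<Sum>p\<in>T. snd p - fst p)"
    proof (rule sum_mono)
      fix p assume p: "p \<in> T"
      have "fam (fst p) (snd p) (Sp p)" using Sp p by blast
      moreover have "fst p \<le> snd p" using el[OF p] by simp
      ultimately show "len (Sp p) \<le> snd p - fst p" by (rule fam_len_le)
    qed
    also have "\<dots> = len T" by (simp add: len_def)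
    finally have "len U < d" using T by simp
    then have "sv f U < e" using d famU by simp
    have svU: "sv f U = (\<Sum>p\<in>T. sv f (Sp p))"
      unfolding U_def sv_def by (rule sum.UNION_disjoint[OF fin finS disj])
    have "(\<Sum>p\<in>T. Var f (fst p) (snd p)) \<le> (\<Sum>p\<in>T. sv f (Sp p) + \<eta>')"
    proof (rule sum_mono)
      fix p assume p: "p \<in> T"
      have "Var f (fst p) (snd p) - \<eta>' < sv f (Sp p)" using Sp p by blast
      then show "Var f (fst p) (snd p) \<le> sv f (Sp p) + \<eta>'" by simp
    qed
    also have "\<dots> = sv f U + real (card T) * \<eta>'" by (simp add: sum.distrib svU)
    also have "real (card T) * \<eta>' \<le> \<eta>"
      using \<open>\<eta> > 0\<close> by (simp add: \<eta>'_def field_simps)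
    finally show "(\<Sum>p\<in>T. Var f (fst p) (snd p)) \<le> e + \<eta>" using \<open>sv f U < e\<close> by simp
  qed
  then show ?thesis using d(1) by blast
qed

definition macs :: "(real \<Rightarrow> real) \<Rightarrow> bool" where
  "macs F \<longleftrightarrow> (\<forall>e>0. \<exists>d>0. \<forall>T. fam 0 1 T \<longrightarrow> len T < d \<longrightarrow> (\<Sum>p\<in>T. F (snd p) - F (fst p)) \<le> e)"

lemma macs_V:
  assumes ac: "abs_continuous_on 0 1 f"
  shows "macs (\<lambda>x. Var f 0 x)"
  unfolding macs_def
proof (intro allI impI)
  fix e :: real assume "e > 0"
  obtain d where d: "d > 0" "\<And>T. fam 0 1 T \<Longrightarrow> len T < d \<Longrightarrow> (\<Sum>p\<in>T. Var f (fst p) (snd p)) \<le> e"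
    using Var_sum_ac[OF ac \<open>e > 0\<close>] by auto
  have "(\<Sum>p\<in>T. Var f 0 (snd p) - Var f 0 (fst p)) \<le> e" if T: "fam 0 1 T" "len T < d" for T
  proof -
    have "(\<Sum>p\<in>T. Var f 0 (snd p) - Var f 0 (fst p)) \<le> (\<Sum>p\<in>T. Var f (fst p) (snd p))"
    proof (rule sum_mono)
      fix p assume p: "p \<in> T"
      have "0 \<le> fst p \<and> fst p < snd p \<and> snd p \<le> 1" using fam_el[OF T(1) p] .
      then have "Var f 0 (snd p) \<le> Var f 0 (fst p) + Var f (fst p) (snd p)"
        using V_sub[OF ac, of "fst p" "snd p"] by simp
      then show "Var f 0 (snd p) - Var f 0 (fst p) \<le> Var f (fst p) (snd p)" by simp
    qed
    then show ?thesis using d(2)[OF T] by simp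
  qed
  then show "\<exists>d>0. \<forall>T. fam 0 1 T \<longrightarrow> len T < d \<longrightarrow> (\<Sum>p\<in>T. Var f 0 (snd p) - Var f 0 (fst p)) \<le> e"
    using d(1) by blast
qed

lemma macs_W:
  assumes ac: "abs_continuous_on 0 1 f"
  shows "macs (\<lambda>x. Var f 0 x - f x)"
  unfolding macs_def
proof (intro allI impI)
  fix e :: real assume "e > 0"
  then have e2: "e / 2 > 0" by simp
  obtain d1 where d1: "d1 > 0" "\<And>T. fam 0 1 T \<Longrightarrow> len T < d1 \<Longrightarrow> (\<Sum>p\<in>T. Var f (fst p) (snd p)) \<le> e / 2"
    using Var_sum_ac[OF ac e2] by auto
  obtain d2 where d2: "d2 > 0" "\<And>S. fam 0 1 S \<Longrightarrow> len S < d2 \<Longrightarrow> sv f S < e / 2"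
    using ac_set[OF ac e2] by auto
  have "(\<Sum>p\<in>T. (Var f 0 (snd p) - f (snd p)) - (Var f 0 (fst p) - f (fst p))) \<le> e"
    if T: "fam 0 1 T" "len T < min d1 d2" for T
  proof -
    have "(\<Sum>p\<in>T. (Var f 0 (snd p) - f (snd p)) - (Var f 0 (fst p) - f (fst p)))
        \<le> (\<Sum>p\<in>T. Var f (fst p) (snd p) + \<bar>f (snd p) - f (fst p)\<bar>)"
    proof (rule sum_mono)
      fix p assume "p \<in> T"
      then have "0 \<le> fst p \<and> fst p < snd p \<and> snd p \<le> 1" using fam_el[OF T(1)] by blast
      then have "Var f 0 (snd p) \<le> Var f 0 (fst p) + Var f (fst p) (snd p)"
        using V_sub[OF ac, of "fst p" "snd p"] by simp
      then show "(Var f 0 (snd p) - f (snd p)) - (Var f 0 (fst p) - f (fst p))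
          \<le> Var f (fst p) (snd p) + \<bar>f (snd p) - f (fst p)\<bar>" by linarith
    qed
    also have "\<dots> = (\<Sum>p\<in>T. Var f (fst p) (snd p)) + sv f T" by (simp add: sum.distrib sv_def)
    also have "\<dots> \<le> e"
    proof -
      have "len T < d1" "len T < d2" using T(2) by auto
      then have "(\<Sum>p\<in>T. Var f (fst p) (snd p)) \<le> e / 2" "sv f T < e / 2"
        using d1(2)[OF T(1)] d2(2)[OF T(1)] by auto
      then show ?thesis by linarith
    qed
    finally show ?thesis .
  qed
  moreover have "min d1 d2 > 0" using d1(1) d2(1) by simp
  ultimately show "\<exists>d>0. \<forall>T. fam 0 1 T \<longrightarrow> len T < d \<longrightarrow>
     (\<Sum>p\<in>T. (Var f 0 (snd p) - f (snd p)) - (Var f 0 (fst p) - f (fst p))) \<le> e"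
    by blast
qed

lemma fam_single: "0 \<le> x \<Longrightarrow> x < y \<Longrightarrow> y \<le> 1 \<Longrightarrow> fam 0 1 {(x, y)}"
  unfolding fam_def by simp

lemma len_single: "len {(x, y)} = y - x"
  unfolding len_def by simp

lemma macs_single:
  assumes "macs F" "e > 0"
  shows "\<exists>d>0. \<forall>x y. 0 \<le> x \<longrightarrow> x < y \<longrightarrow> y \<le> 1 \<longrightarrow> y - x < d \<longrightarrow> F y - F x \<le> e"
proof -
  obtain d where d: "d > 0" "\<And>T. fam 0 1 T \<Longrightarrow> len T < d \<Longrightarrow> (\<Sum>p\<in>T. F (snd p) - F (fst p)) \<le> e"
    using assms unfolding macs_def by blast
  have "F y - F x \<le> e" if "0 \<le> x" "x < y" "y \<le> 1" "y - x < d" for x y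
    using d(2)[OF fam_single[OF that(1-3)]] that(4) by (simp add: len_single)
  then show ?thesis using d(1) by blast
qed

lemma macs_cont:
  assumes mono: "\<And>x y. 0 \<le> x \<Longrightarrow> x \<le> y \<Longrightarrow> y \<le> 1 \<Longrightarrow> F x \<le> F y" and ac: "macs F"
  shows "continuous_on {0..1} F"
  unfolding continuous_on_iff
proof (intro ballI allI impI)
  fix x e :: real assume x: "x \<in> {0..1}" and e: "0 < e"
  obtain d where d: "d > 0" "\<And>x y. 0 \<le> x \<Longrightarrow> x < y \<Longrightarrow> y \<le> 1 \<Longrightarrow> y - x < d \<Longrightarrow> F y - F x \<le> e / 2"
    using macs_single[OF ac, of "e/2"] e by auto
  have "dist (F x') (F x) < e" if x': "x' \<in> {0..1}" "dist x' x < d" for x'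
  proof (cases x' x rule: linorder_cases)
    case less
    then have "F x - F x' \<le> e / 2" "F x' \<le> F x" using d(2)[of x' x] mono[of x' x] x x' by (auto simp: dist_real_def)
    then show ?thesis using e by (simp add: dist_real_def)
  next
    case equal
    then show ?thesis using e by simp
  next
    case greater
    then have "F x' - F x \<le> e / 2" "F x \<le> F x'" using d(2)[of x x'] mono[of x x'] x x' by (auto simp: dist_real_def)
    then show ?thesis using e by (simp add: dist_real_def)
  qed
  then show "\<exists>d>0. \<forall>x'\<in>{0..1}. dist x' x < d \<longrightarrow> dist (F x') (F x) < e" using d(1) by blast
qed

lemma interiors_disjoint_real:
  fixes a b c d :: real
  assumes "a < b" "c < d" "{a<..<b} \<inter> {c<..<d} = {}"
  shows "b \<le> c \<or> d \<le> a"
proof (rule ccontr)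
  assume "\<not> (b \<le> c \<or> d \<le> a)"
  then have "max a c < min b d" using assms by auto
  then have "(max a c + min b d) / 2 \<in> {a<..<b} \<inter> {c<..<d}" by auto
  then show False using assms(3) by blast
qed

lemma density_exists:
  fixes F :: "real \<Rightarrow> real"
  assumes mono: "\<And>x y. 0 \<le> x \<Longrightarrow> x \<le> y \<Longrightarrow> y \<le> 1 \<Longrightarrow> F x \<le> F y" and ac: "macs F"
  shows "\<exists>g. integrable lborel g \<and>
    (\<forall>a b. 0 \<le> a \<longrightarrow> a \<le> b \<longrightarrow> b \<le> 1 \<longrightarrow> F b - F a = (\<integral>x. indicator {a<..b} x * g x \<partial>lborel))"
proof -
  define c where "c = (\<lambda>x::real. max 0 (min 1 x))"
  define H where "H = (\<lambda>x. F (c x))"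
  have c01: "\<And>x. c x \<in> {0..1}" by (auto simp: c_def)
  have cmono: "\<And>x y. x \<le> y \<Longrightarrow> c x \<le> c y" by (auto simp: c_def)
  have Hmono: "\<And>x y. x \<le> y \<Longrightarrow> H x \<le> H y"
  proof -
    fix x y :: real assume "x \<le> y"
    then show "H x \<le> H y" unfolding H_def using mono[of "c x" "c y"] c01[of x] c01[of y] cmono[of x y] by auto
  qed
  have contF: "continuous_on {0..1} F" by (rule macs_cont[OF mono ac])
  have contc: "continuous_on UNIV c" unfolding c_def by (intro continuous_intros)
  have contH: "continuous_on UNIV H" unfolding H_def
    by (rule continuous_on_compose2[OF contF contc]) (use c01 in auto)
  have rc: "continuous (at_right a) H" for a
    using contH continuous_on_eq_continuous_at[of UNIV H] continuous_at_imp_continuous_within by blast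
  have Hc: "\<And>x. 0 \<le> x \<Longrightarrow> x \<le> 1 \<Longrightarrow> H x = F x" by (simp add: H_def c_def)
  have Hlow: "\<And>x. x \<le> 0 \<Longrightarrow> H x = F 0" by (simp add: H_def c_def)
  have Hhigh: "\<And>x. 1 \<le> x \<Longrightarrow> H x = F 1" by (simp add: H_def c_def)
  define \<mu> where "\<mu> = interval_measure H"
  have Ioc: "\<And>a b. a \<le> b \<Longrightarrow> emeasure \<mu> {a<..b} = ennreal (H b - H a)"
    unfolding \<mu>_def using emeasure_interval_measure_Ioc Hmono rc by blast
  have Icc: "\<And>a b. a \<le> b \<Longrightarrow> emeasure \<mu> {a..b} = ennreal (H b - H a)"
    unfolding \<mu>_def using emeasure_interval_measure_Icc Hmono contH by blast
  have sets\<mu>: "sets \<mu> = sets borel" by (simp add: \<mu>_def)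
  have space\<mu>: "space \<mu> = UNIV" by (simp add: \<mu>_def)
  have null_low: "emeasure \<mu> {..0} = 0"
  proof -
    have eq: "{..0::real} = (\<Union>k::nat. {- real k<..0})"
    proof (intro equalityI subsetI)
      fix x :: real assume "x \<in> {..0}"
      obtain k :: nat where "- x < real k" using reals_Archimedean2 by blast
      then have "x \<in> {- real k<..0}" using \<open>x \<in> {..0}\<close> by auto
      then show "x \<in> (\<Union>k::nat. {- real k<..0})" by blast
    qed auto
    have "emeasure \<mu> (\<Union>k::nat. {- real k<..0}) = 0"
      by (rule emeasure_UN_eq_0) (auto simp: Ioc Hlow sets\<mu>)
    then show ?thesis using eq by simp
  qed
  have null_high: "emeasure \<mu> {1<..} = 0"
  proof -
    have eq: "{1::real<..} = (\<Union>k::nat. {1<..1 + real k})"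
    proof (intro equalityI subsetI)
      fix x :: real assume "x \<in> {1<..}"
      obtain k :: nat where "x < real k" using reals_Archimedean2 by blast
      then have "x \<in> {1<..1 + real k}" using \<open>x \<in> {1<..}\<close> by auto
      then show "x \<in> (\<Union>k::nat. {1<..1 + real k})" by blast
    qed auto
    have "emeasure \<mu> (\<Union>k::nat. {1<..1 + real k}) = 0"
      by (rule emeasure_UN_eq_0) (auto simp: Ioc Hhigh sets\<mu>)
    then show ?thesis using eq by simp
  qed
  have cover: "UNIV = {..0} \<union> {0<..1} \<union> {1::real<..}" by auto
  have fin\<mu>: "finite_measure \<mu>"
  proof (rule finite_measureI)
    have "emeasure \<mu> ({..0} \<union> {0<..1} \<union> {1<..}) \<le> emeasure \<mu> ({..0} \<union> {0<..1}) + emeasure \<mu> {1<..}"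
      by (rule emeasure_subadditive) (auto simp: sets\<mu>)
    also have "\<dots> \<le> emeasure \<mu> {..0} + emeasure \<mu> {0<..1} + emeasure \<mu> {1<..}"
      by (intro add_right_mono emeasure_subadditive) (auto simp: sets\<mu>)
    also have "\<dots> = ennreal (H 1 - H 0)" using null_low null_high Ioc[of 0 1] by simp
    finally have le: "emeasure \<mu> ({..0} \<union> {0<..1} \<union> {1<..}) \<le> ennreal (H 1 - H 0)" .
    have "emeasure \<mu> (space \<mu>) \<le> ennreal (H 1 - H 0)"
      unfolding space\<mu> by (subst cover) (rule le)
    then show "emeasure \<mu> (space \<mu>) \<noteq> \<infinity>"
      using neq_top_trans[of "ennreal (H 1 - H 0)"] by simp
  qed
  have core: "emeasure \<mu> (N \<inter> {0..1}) = 0" if N: "N \<in> null_sets lborel" for N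
  proof -
    define N' where "N' = N \<inter> {0..1}"
    have "N \<in> null_sets lebesgue" using null_sets_completionI[OF N] .
    then have "negligible N" by (simp add: negligible_iff_null_sets)
    then have negN': "negligible N'" unfolding N'_def by (rule negligible_subset) auto
    have Nb: "N \<in> sets borel" using null_setsD2[OF N] by simp
    have N'sets: "N' \<in> sets \<mu>" unfolding N'_def sets\<mu> using Nb by (intro sets.Int) auto
    have eps: "emeasure \<mu> N' \<le> 0 + ennreal e" if e: "e > 0" for e
    proof -
      obtain d where d: "d > 0" "\<And>T. fam 0 1 T \<Longrightarrow> len T < d \<Longrightarrow> (\<Sum>p\<in>T. F (snd p) - F (fst p)) \<le> e"
        using ac e unfolding macs_def by blast
      have "N' \<subseteq> cbox 0 1" by (auto simp: N'_def)
      moreover have "d / 2 > 0" using d by simp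
      ultimately obtain \<D> where D: "countable \<D>"
        "\<And>K. K \<in> \<D> \<Longrightarrow> K \<subseteq> cbox 0 1 \<and> K \<noteq> {} \<and> (\<exists>c d. K = cbox c d)"
        "pairwise (\<lambda>A B. interior A \<inter> interior B = {}) \<D>" "N' \<subseteq> \<Union>\<D>" "\<Union>\<D> \<in> lmeasurable"
        "measure lebesgue (\<Union>\<D>) \<le> measure lebesgue N' + d / 2"
        using measurable_outer_intervals_bounded[of N' 0 1 "d/2"] negligible_imp_measurable[OF negN'] by metis
      have mN': "measure lebesgue N' = 0" using negN' by (simp add: negligible_imp_measure0)
      define lo where "lo = (\<lambda>K::real set. Inf K)"
      define hi where "hi = (\<lambda>K::real set. Sup K)"
      have Kform: "K = {lo K..hi K} \<and> lo K \<le> hi K \<and> 0 \<le> lo K \<and> hi K \<le> 1" if KD: "K \<in> \<D>" for K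
      proof -
        obtain c' d' where K: "K = cbox c' d'" "K \<subseteq> cbox 0 1" "K \<noteq> {}" using D(2)[OF KD] by blast
        then have "c' \<le> d'" by auto
        then have "lo K = c'" "hi K = d'" using K by (auto simp: lo_def hi_def)
        then show ?thesis using K \<open>c' \<le> d'\<close> by auto
      qed
      have Kmeas: "emeasure \<mu> K = ennreal (F (hi K) - F (lo K))" if "K \<in> \<D>" for K
      proof -
        have k: "K = {lo K..hi K}" "lo K \<le> hi K" "0 \<le> lo K" "hi K \<le> 1" using Kform[OF that] by auto
        have "emeasure \<mu> K = ennreal (H (hi K) - H (lo K))" using Icc[OF k(2)] k(1) by simp
        also have "H (hi K) = F (hi K)" using k by (intro Hc) auto
        also have "H (lo K) = F (lo K)" using k by (intro Hc) auto
        finally show ?thesis .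
      qed
      have finsum: "(\<Sum>K\<in>\<G>. emeasure \<mu> K) \<le> ennreal e" if G: "finite \<G>" "\<G> \<subseteq> \<D>" for \<G>
      proof -
        define \<G>' where "\<G>' = {K\<in>\<G>. lo K < hi K}"
        define S where "S = (\<lambda>K. (lo K, hi K)) ` \<G>'"
        have injS: "inj_on (\<lambda>K. (lo K, hi K)) \<G>'"
        proof (rule inj_onI)
          fix K K' assume "K \<in> \<G>'" "K' \<in> \<G>'" "(lo K, hi K) = (lo K', hi K')"
          then show "K = K'" using Kform[of K] Kform[of K'] G(2) \<G>'_def by auto
        qed
        have famS: "fam 0 1 S"
          unfolding fam_def
        proof (intro conjI ballI impI)
          show "finite S" using G(1) by (simp add: S_def \<G>'_def)
        next
          fix p assume "p \<in> S"
          then obtain K where "K \<in> \<G>'" "p = (lo K, hi K)" by (auto simp: S_def)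
          then show "0 \<le> fst p" "fst p < snd p" "snd p \<le> 1" using Kform[of K] G(2) by (auto simp: \<G>'_def)
        next
          fix p q assume "p \<in> S" "q \<in> S" "p \<noteq> q"
          then obtain K K' where KK: "K \<in> \<G>'" "p = (lo K, hi K)" "K' \<in> \<G>'" "q = (lo K', hi K')" by (auto simp: S_def)
          then have "K \<noteq> K'" using \<open>p \<noteq> q\<close> by auto
          moreover have "K \<in> \<D>" "K' \<in> \<D>" using KK G(2) by (auto simp: \<G>'_def)
          ultimately have "interior K \<inter> interior K' = {}" using D(3) by (auto simp: pairwise_def)
          moreover have "interior K = {lo K<..<hi K}" "interior K' = {lo K'<..<hi K'}"
            using Kform[OF \<open>K \<in> \<D>\<close>] Kform[OF \<open>K' \<in> \<D>\<close>] by (metis interior_atLeastAtMost_real)+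
          ultimately show "snd p \<le> fst q \<or> snd q \<le> fst p"
            using interiors_disjoint_real[of "lo K" "hi K" "lo K'" "hi K'"] KK by (auto simp: \<G>'_def)
        qed
        have "len S = measure lebesgue (\<Union>p\<in>S. {fst p..snd p})" by (rule fam_len_measure[OF famS])
        also have "\<dots> \<le> measure lebesgue (\<Union>\<D>)"
        proof (rule measure_mono_fmeasurable)
          show "(\<Union>p\<in>S. {fst p..snd p}) \<subseteq> \<Union>\<D>"
          proof
            fix x assume "x \<in> (\<Union>p\<in>S. {fst p..snd p})"
            then obtain K where "K \<in> \<G>'" "x \<in> {lo K..hi K}" by (auto simp: S_def)
            then have "K \<in> \<D>" "x \<in> {lo K..hi K}" using G(2) by (auto simp: \<G>'_def)
            then have "x \<in> K" using Kform[of K] by auto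
            then show "x \<in> \<Union>\<D>" using \<open>K \<in> \<D>\<close> by blast
          qed
          show "(\<Union>p\<in>S. {fst p..snd p}) \<in> sets lebesgue" using famS by (auto simp: fam_def)
          show "\<Union>\<D> \<in> lmeasurable" by (rule D(5))
        qed
        also have "\<dots> < d" using D(6) mN' d(1) by simp
        finally have "(\<Sum>p\<in>S. F (snd p) - F (fst p)) \<le> e" using d(2)[OF famS] by simp
        moreover have "(\<Sum>p\<in>S. F (snd p) - F (fst p)) = (\<Sum>K\<in>\<G>'. F (hi K) - F (lo K))"
          unfolding S_def by (subst sum.reindex[OF injS]) simp
        moreover have "(\<Sum>K\<in>\<G>'. F (hi K) - F (lo K)) = (\<Sum>K\<in>\<G>. F (hi K) - F (lo K))"
        proof (rule sum.mono_neutral_left)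
          show "finite \<G>" by (rule G(1))
          show "\<G>' \<subseteq> \<G>" by (auto simp: \<G>'_def)
          show "\<forall>K\<in>\<G> - \<G>'. F (hi K) - F (lo K) = 0"
          proof
            fix K assume "K \<in> \<G> - \<G>'"
            then have "lo K = hi K" using Kform[of K] G(2) by (force simp: \<G>'_def)
            then show "F (hi K) - F (lo K) = 0" by simp
          qed
        qed
        moreover have "(\<Sum>K\<in>\<G>. emeasure \<mu> K) = ennreal (\<Sum>K\<in>\<G>. F (hi K) - F (lo K))"
        proof -
          have "(\<Sum>K\<in>\<G>. emeasure \<mu> K) = (\<Sum>K\<in>\<G>. ennreal (F (hi K) - F (lo K)))"
            using Kmeas G(2) by (auto intro!: sum.cong)
          also have "\<dots> = ennreal (\<Sum>K\<in>\<G>. F (hi K) - F (lo K))"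
            by (rule sum_ennreal) (use Kform G(2) mono in \<open>force\<close>)
          finally show ?thesis .
        qed
        ultimately show ?thesis by (simp add: ennreal_leI)
      qed
      have UD_sets: "\<Union>\<D> \<in> sets \<mu>"
      proof -
        have "\<D> \<subseteq> sets borel"
        proof
          fix K assume "K \<in> \<D>"
          then show "K \<in> sets borel" using Kform[of K] by (metis borel_closed closed_atLeastAtMost)
        qed
        then show ?thesis using sets.countable_Union[OF D(1)] by (simp add: sets\<mu>)
      qed
      have "emeasure \<mu> (\<Union>\<D>) \<le> ennreal e"
      proof (cases "\<D> = {}")
        case True
        then show ?thesis by simp
      next
        case False
        define E where "E = from_nat_into \<D>"
        have rE: "range E = \<D>" unfolding E_def by (rule range_from_nat_into[OF False D(1)])
        define A where "A = (\<lambda>n. \<Union>(E ` {..<n}))"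
        have incA: "incseq A" unfolding A_def incseq_def
          by (intro allI impI UN_mono) auto
        have Esets: "E i \<in> sets \<mu>" for i
        proof -
          have "E i \<in> \<D>" using rE by blast
          then have "E i = {lo (E i)..hi (E i)}" using Kform by blast
          then have "closed (E i)" by (metis closed_atLeastAtMost)
          then show ?thesis unfolding sets\<mu> by (rule borel_closed)
        qed
        have Asets: "range A \<subseteq> sets \<mu>"
        proof
          fix X assume "X \<in> range A"
          then obtain n where "X = \<Union>(E ` {..<n})" by (auto simp: A_def)
          then show "X \<in> sets \<mu>" using Esets by (simp add: sets.finite_UN)
        qed
        have UA: "\<Union>(range A) = \<Union>\<D>"
        proof (intro equalityI subsetI)
          fix x assume "x \<in> \<Union>(range A)"
          then obtain n i where "i < n" "x \<in> E i" by (auto simp: A_def)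
          then show "x \<in> \<Union>\<D>" using rE by blast
        next
          fix x assume "x \<in> \<Union>\<D>"
          then obtain i where "x \<in> E i" using rE by blast
          then have "x \<in> A (Suc i)" by (auto simp: A_def)
          then show "x \<in> \<Union>(range A)" by blast
        qed
        have "emeasure \<mu> (A n) \<le> ennreal e" for n
        proof -
          have "emeasure \<mu> (A n) = emeasure \<mu> (\<Union>((\<lambda>K. K) ` (E ` {..<n})))" by (simp add: A_def)
          also have "\<dots> \<le> (\<Sum>K\<in>E ` {..<n}. emeasure \<mu> K)"
            by (rule emeasure_subadditive_finite) (use Esets in auto)
          also have "\<dots> \<le> ennreal e" by (rule finsum) (use rE in auto)
          finally show ?thesis .
        qed
        then have "(SUP n. emeasure \<mu> (A n)) \<le> ennreal e" by (simp add: SUP_least)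
        then show ?thesis using SUP_emeasure_incseq[OF Asets incA] UA by simp
      qed
      moreover have "emeasure \<mu> N' \<le> emeasure \<mu> (\<Union>\<D>)" by (rule emeasure_mono[OF D(4) UD_sets])
      ultimately show ?thesis by simp
    qed
    have "emeasure \<mu> N' \<le> 0"
    proof (rule ennreal_le_epsilon)
      fix e :: real assume "0 < e"
      then show "emeasure \<mu> N' \<le> 0 + ennreal e" by (rule eps)
    qed
    then show ?thesis unfolding N'_def by simp
  qed
  have ac\<mu>: "absolutely_continuous lborel \<mu>"
    unfolding absolutely_continuous_def
  proof
    fix N :: "real set" assume N: "N \<in> null_sets lborel"
    have Nsets: "N \<in> sets \<mu>" using null_setsD2[OF N] by (simp add: sets\<mu>)
    have Nb: "N \<in> sets borel" using Nsets by (simp add: sets\<mu>)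
    have s1: "N \<inter> {0..1} \<in> sets \<mu>" unfolding sets\<mu> using Nb by (intro sets.Int) auto
    have s2: "{..0::real} \<in> sets \<mu>" "{1::real<..} \<in> sets \<mu>" unfolding sets\<mu> by auto
    have s3: "(N \<inter> {0..1}) \<union> {..0} \<in> sets \<mu>" by (rule sets.Un[OF s1 s2(1)])
    have s4: "(N \<inter> {0..1}) \<union> {..0} \<union> {1<..} \<in> sets \<mu>" by (rule sets.Un[OF s3 s2(2)])
    have "emeasure \<mu> N \<le> emeasure \<mu> ((N \<inter> {0..1}) \<union> {..0} \<union> {1<..})"
      by (rule emeasure_mono[OF _ s4]) auto
    also have "\<dots> \<le> emeasure \<mu> ((N \<inter> {0..1}) \<union> {..0}) + emeasure \<mu> {1<..}"
      by (rule emeasure_subadditive[OF s3 s2(2)])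
    also have "\<dots> \<le> emeasure \<mu> (N \<inter> {0..1}) + emeasure \<mu> {..0} + emeasure \<mu> {1<..}"
      by (intro add_right_mono emeasure_subadditive[OF s1 s2(1)])
    also have "\<dots> = 0" using core[OF N] null_low null_high by simp
    finally show "N \<in> null_sets \<mu>" using Nsets by auto
  qed
  have setseq: "sets \<mu> = sets lborel" by (simp add: sets\<mu>)
  obtain D where D: "D \<in> borel_measurable lborel" "AE x in lborel. RN_deriv lborel \<mu> x = ennreal (D x)"
    "\<And>x. 0 \<le> D x"
    using sigma_finite_measure.real_RN_deriv[OF sigma_finite_lborel fin\<mu> ac\<mu> setseq] by metis
  have dens: "density lborel (RN_deriv lborel \<mu>) = \<mu>"
    by (rule sigma_finite_measure.density_RN_deriv[OF sigma_finite_lborel ac\<mu> setseq])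
  have key: "(\<integral>\<^sup>+x. ennreal (indicator {a<..b} x * D x) \<partial>lborel) = ennreal (H b - H a)" if "a \<le> b" for a b
  proof -
    have "ennreal (H b - H a) = emeasure (density lborel (RN_deriv lborel \<mu>)) {a<..b}"
      using Ioc[OF that] dens by simp
    also have "\<dots> = (\<integral>\<^sup>+x. RN_deriv lborel \<mu> x * indicator {a<..b} x \<partial>lborel)"
      by (simp add: emeasure_density)
    also have "\<dots> = (\<integral>\<^sup>+x. ennreal (indicator {a<..b} x * D x) \<partial>lborel)"
      by (rule nn_integral_cong_AE) (use D(2) in \<open>eventually_elim, auto split: split_indicator\<close>)
    finally show ?thesis by simp
  qed
  define g where "g = (\<lambda>x. indicator {0<..1} x * D x)"
  have gint: "integrable lborel g"
  proof (rule integrableI_nonneg)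
    show "g \<in> borel_measurable lborel" unfolding g_def using D(1) by measurable
    show "AE x in lborel. 0 \<le> g x" using D(3) by (auto simp: g_def)
    show "(\<integral>\<^sup>+x. ennreal (g x) \<partial>lborel) < \<infinity>" using key[of 0 1] by (simp add: g_def)
  qed
  have "F b - F a = (\<integral>x. indicator {a<..b} x * g x \<partial>lborel)" if ab: "0 \<le> a" "a \<le> b" "b \<le> 1" for a b
  proof -
    have eqf: "(\<lambda>x. indicator {a<..b} x * g x) = (\<lambda>x. indicator {a<..b} x * D x)"
      using ab by (auto simp: g_def fun_eq_iff split: split_indicator)
    have "(\<integral>x. indicator {a<..b} x * D x \<partial>lborel) = enn2real (\<integral>\<^sup>+x. ennreal (indicator {a<..b} x * D x) \<partial>lborel)"
      by (rule integral_eq_nn_integral) (use D in auto)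
    also have "\<dots> = H b - H a" using key[OF ab(2)] Hmono[OF ab(2)] by simp
    also have "\<dots> = F b - F a" using ab by (simp add: Hc)
    finally show ?thesis using eqf by simp
  qed
  then show ?thesis using gint by blast
qed

lemma f_density:
  assumes ac: "abs_continuous_on 0 1 f"
  shows "\<exists>G. integrable lborel G \<and>
    (\<forall>a b. 0 \<le> a \<longrightarrow> a \<le> b \<longrightarrow> b \<le> 1 \<longrightarrow> f b - f a = (\<integral>x. indicator {a<..b} x * G x \<partial>lborel))"
proof -
  have m1: "Var f 0 x \<le> Var f 0 y" if "0 \<le> x" "x \<le> y" "y \<le> 1" for x y
    using V_incr[OF ac that] by simp
  have m2: "Var f 0 x - f x \<le> Var f 0 y - f y" if "0 \<le> x" "x \<le> y" "y \<le> 1" for x y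
    using V_incr[OF ac that] by linarith
  obtain g1 where g1: "integrable lborel g1"
    "\<And>a b. 0 \<le> a \<Longrightarrow> a \<le> b \<Longrightarrow> b \<le> 1 \<Longrightarrow> Var f 0 b - Var f 0 a = (\<integral>x. indicator {a<..b} x * g1 x \<partial>lborel)"
    using density_exists[OF m1 macs_V[OF ac]] by blast
  obtain g2 where g2: "integrable lborel g2"
    "\<And>a b. 0 \<le> a \<Longrightarrow> a \<le> b \<Longrightarrow> b \<le> 1 \<Longrightarrow> (Var f 0 b - f b) - (Var f 0 a - f a) = (\<integral>x. indicator {a<..b} x * g2 x \<partial>lborel)"
    using density_exists[OF m2 macs_W[OF ac]] by blast
  have "f b - f a = (\<integral>x. indicator {a<..b} x * (g1 x - g2 x) \<partial>lborel)" if ab: "0 \<le> a" "a \<le> b" "b \<le> 1" for a b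
  proof -
    have i1: "integrable lborel (\<lambda>x. indicator {a<..b} x * g1 x)"
      using integrable_real_mult_indicator[OF _ g1(1), of "{a<..b}"] by (simp add: mult.commute)
    have i2: "integrable lborel (\<lambda>x. indicator {a<..b} x * g2 x)"
      using integrable_real_mult_indicator[OF _ g2(1), of "{a<..b}"] by (simp add: mult.commute)
    have "(\<integral>x. indicator {a<..b} x * (g1 x - g2 x) \<partial>lborel) =
        (\<integral>x. indicator {a<..b} x * g1 x - indicator {a<..b} x * g2 x \<partial>lborel)"
      by (simp add: algebra_simps)
    also have "\<dots> = (\<integral>x. indicator {a<..b} x * g1 x \<partial>lborel) - (\<integral>x. indicator {a<..b} x * g2 x \<partial>lborel)"
      by (rule Bochner_Integration.integral_diff[OF i1 i2])
    also have "\<dots> = f b - f a" using g1(2)[OF ab] g2(2)[OF ab] by simp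
    finally show ?thesis by simp
  qed
  moreover have "integrable lborel (\<lambda>x. g1 x - g2 x)" using g1(1) g2(1) by simp
  ultimately show ?thesis by blast
qed

definition ca :: "nat \<Rightarrow> nat \<Rightarrow> real" where "ca n i = real i / real n"
definition cp :: "nat \<Rightarrow> nat \<Rightarrow> real" where "cp n i = real (Suc i) / real (Suc n)"
definition cb :: "nat \<Rightarrow> nat \<Rightarrow> real" where "cb n i = real (Suc i) / real n"

definition Kn :: "nat \<Rightarrow> real \<Rightarrow> real" where
  "Kn n x = (\<Sum>i<n. cp n i * indicator {ca n i<..cp n i} x - (1 - cp n i) * indicator {cp n i<..cb n i} x)"

definition Rn :: "(real \<Rightarrow> real) \<Rightarrow> nat \<Rightarrow> real" where
  "Rn f n = (\<Sum>i<n. cp n i * (f (cp n i) - f (ca n i)) - (1 - cp n i) * (f (cb n i) - f (cp n i)))"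

lemma cell_order:
  assumes "i < n"
  shows "0 \<le> ca n i" "ca n i \<le> cp n i" "cp n i \<le> cb n i" "cb n i \<le> 1" "0 \<le> cp n i" "cp n i \<le> 1"
    "cb n i - ca n i = 1 / real n"
proof -
  have n: "real n > 0" using assms by simp
  have i: "real i < real n" using assms by simp
  show "0 \<le> ca n i" by (simp add: ca_def)
  show "ca n i \<le> cp n i" unfolding ca_def cp_def using n i by (simp add: field_simps)
  show "cp n i \<le> cb n i" unfolding cb_def cp_def using n i by (simp add: field_simps)
  show "cb n i \<le> 1" unfolding cb_def using n assms by (simp add: field_simps)
  show "0 \<le> cp n i" by (simp add: cp_def)
  show "cp n i \<le> 1" unfolding cp_def using assms by (simp add: field_simps)
  show "cb n i - ca n i = 1 / real n" unfolding cb_def ca_def using n by (simp add: field_simps)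
qed

lemma cell_identity:
  assumes "i < n"
  shows "cp n i * (cp n i - ca n i) = (1 - cp n i) * (cb n i - cp n i)"
proof -
  have n: "real n > 0" using assms by simp
  show ?thesis unfolding ca_def cp_def cb_def using n by (simp add: field_simps)
qed

lemma Kn_borel [measurable]: "Kn n \<in> borel_measurable borel"
  unfolding Kn_def by measurable

lemma Rn_integral:
  assumes G: "integrable lborel G"
    and fG: "\<And>a b. 0 \<le> a \<Longrightarrow> a \<le> b \<Longrightarrow> b \<le> 1 \<Longrightarrow> f b - f a = (\<integral>x. indicator {a<..b} x * G x \<partial>lborel)"
  shows "Rn f n = (\<integral>x. Kn n x * G x \<partial>lborel)"
proof -
  have int: "integrable lborel (\<lambda>x. indicator A x * G x)" if "A \<in> sets borel" for A
    using integrable_real_mult_indicator[OF _ G, of A] that by (simp add: mult.commute)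
  have "(\<integral>x. Kn n x * G x \<partial>lborel) = (\<integral>x. (\<Sum>i<n. cp n i * (indicator {ca n i<..cp n i} x * G x)
      - (1 - cp n i) * (indicator {cp n i<..cb n i} x * G x)) \<partial>lborel)"
    unfolding Kn_def sum_distrib_right
    by (intro Bochner_Integration.integral_cong refl sum.cong) (simp add: algebra_simps)
  also have "\<dots> = (\<Sum>i<n. (\<integral>x. cp n i * (indicator {ca n i<..cp n i} x * G x)
      - (1 - cp n i) * (indicator {cp n i<..cb n i} x * G x) \<partial>lborel))"
    by (rule Bochner_Integration.integral_sum) (use int in auto)
  also have "\<dots> = (\<Sum>i<n. cp n i * (\<integral>x. indicator {ca n i<..cp n i} x * G x \<partial>lborel)
      - (1 - cp n i) * (\<integral>x. indicator {cp n i<..cb n i} x * G x \<partial>lborel))"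
    by (rule sum.cong) (use int in auto)
  also have "\<dots> = Rn f n"
    unfolding Rn_def
  proof (rule sum.cong)
    fix i assume "i \<in> {..<n}"
    then have i: "i < n" by simp
    show "cp n i * (\<integral>x. indicator {ca n i<..cp n i} x * G x \<partial>lborel)
      - (1 - cp n i) * (\<integral>x. indicator {cp n i<..cb n i} x * G x \<partial>lborel) =
      cp n i * (f (cp n i) - f (ca n i)) - (1 - cp n i) * (f (cb n i) - f (cp n i))"
      using fG[of "ca n i" "cp n i"] fG[of "cp n i" "cb n i"] cell_order[OF i] by simp
  qed simp
  finally show ?thesis by simp
qed

lemma card_le1_sum:
  fixes g :: "nat \<Rightarrow> real"
  assumes "\<And>i j. i < n \<Longrightarrow> j < n \<Longrightarrow> P i \<Longrightarrow> P j \<Longrightarrow> i = j"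
    and "\<And>i. i < n \<Longrightarrow> \<not> P i \<Longrightarrow> g i = 0"
    and "\<And>i. i < n \<Longrightarrow> \<bar>g i\<bar> \<le> B" and "0 \<le> B"
  shows "(\<Sum>i<n. \<bar>g i\<bar>) \<le> B"
proof -
  define J where "J = {i\<in>{..<n}. P i}"
  have "(\<Sum>i<n. \<bar>g i\<bar>) = (\<Sum>i\<in>J. \<bar>g i\<bar>)"
    by (rule sum.mono_neutral_right) (use assms(2) in \<open>auto simp: J_def\<close>)
  also have "\<dots> \<le> B"
  proof (cases "J = {}")
    case True
    then show ?thesis using assms(4) by simp
  next
    case False
    then obtain j where j: "j \<in> J" by auto
    then have "J = {j}" using assms(1) by (auto simp: J_def)
    have "j < n" using j by (simp add: J_def)
    then show ?thesis using assms(3)[of j] \<open>J = {j}\<close> by simp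
  qed
  finally show ?thesis .
qed

lemma Kn_abs: "\<bar>Kn n x\<bar> \<le> indicator {0<..1} x"
proof -
  let ?t = "\<lambda>i. cp n i * indicator {ca n i<..cp n i} x - (1 - cp n i) * indicator {cp n i<..cb n i} x"
  have "\<bar>Kn n x\<bar> \<le> (\<Sum>i<n. \<bar>?t i\<bar>)" unfolding Kn_def by (rule sum_abs)
  also have "\<dots> \<le> indicator {0<..1} x"
  proof (cases "x \<in> {0<..1}")
    case True
    have "(\<Sum>i<n. \<bar>?t i\<bar>) \<le> 1"
    proof (rule card_le1_sum[where P = "\<lambda>i. ca n i < x \<and> x \<le> cb n i"])
      fix i j assume ij: "i < n" "j < n" "ca n i < x \<and> x \<le> cb n i" "ca n j < x \<and> x \<le> cb n j"
      then have n: "real n > 0" by simp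
      have "real i < x * n" "x * n \<le> real i + 1" "real j < x * n" "x * n \<le> real j + 1"
        using ij n by (auto simp: ca_def cb_def field_simps)
      then have "real i < real j + 1" "real j < real i + 1" by linarith+
      then have "real i < real (Suc j)" "real j < real (Suc i)" by simp_all
      then have "i < Suc j" "j < Suc i" by (simp_all only: of_nat_less_iff)
      then show "i = j" by linarith
    next
      fix i assume i: "i < n" "\<not> (ca n i < x \<and> x \<le> cb n i)"
      then show "?t i = 0" using cell_order[OF i(1)] by (auto simp: indicator_def)
    next
      fix i assume i: "i < n"
      show "\<bar>?t i\<bar> \<le> 1" using cell_order[OF i] by (auto simp: indicator_def)
    qed simp
    then show ?thesis using True by simp
  next
    case False
    have "?t i = 0" if "i < n" for i
      using cell_order[OF that] False by (auto simp: indicator_def)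
    then show ?thesis using False by simp
  qed
  finally show ?thesis .
qed

lemma Kn_zero_above: "x > 1 \<Longrightarrow> Kn n x = 0"
  using Kn_abs[of n x] by (simp add: indicator_def)

lemma int_01: "integrable lborel (indicator {0<..1::real} :: real \<Rightarrow> real)"
  by (simp add: integrable_indicator_iff emeasure_lborel_Ioc)

lemma Kn_mult_int:
  assumes "integrable lborel g"
  shows "integrable lborel (\<lambda>x. Kn n x * g x)"
proof (rule Bochner_Integration.integrable_bound[OF assms])
  show "(\<lambda>x. Kn n x * g x) \<in> borel_measurable lborel" using assms by measurable
  show "AE x in lborel. norm (Kn n x * g x) \<le> norm (g x)"
  proof (rule AE_I2)
    fix x
    have "\<bar>Kn n x\<bar> \<le> 1" using Kn_abs[of n x] by (cases "x \<in> {0<..1}") auto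
    then show "norm (Kn n x * g x) \<le> norm (g x)" by (simp add: abs_mult mult_left_le_one_le)
  qed
qed

lemma Kn_ind_int:
  assumes "A \<in> sets borel"
  shows "integrable lborel (\<lambda>x. Kn n x * indicator A x)"
proof (rule Bochner_Integration.integrable_bound[OF int_01])
  show "(\<lambda>x. Kn n x * indicator A x) \<in> borel_measurable lborel" using assms by measurable
  show "AE x in lborel. norm (Kn n x * indicator A x) \<le> norm (indicator {0<..1} x :: real)"
  proof (rule AE_I2)
    fix x
    show "norm (Kn n x * indicator A x) \<le> norm (indicator {0<..1} x :: real)"
      using Kn_abs[of n x] by (auto simp: indicator_def abs_mult)
  qed
qed

lemma Kn_int: "integrable lborel (Kn n)"
  using Kn_ind_int[of UNIV n] by simp

lemma int_Ioc_atMost: "integrable lborel (indicator ({u<..v} \<inter> {..c}) :: real \<Rightarrow> real)"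
proof -
  have e: "{u<..v} \<inter> {..c} = {u<..min v c}" by auto
  show ?thesis unfolding e by (cases "u \<le> min v c") (auto simp: integrable_indicator_iff)
qed

lemma meas_Ioc_atMost: "u \<le> v \<Longrightarrow> measure lborel ({u<..v} \<inter> {..c}) = max 0 (min v c - u)"
proof -
  have e: "{u<..v} \<inter> {..c} = {u<..min v c}" by auto
  show ?thesis unfolding e by (cases "u \<le> min v c") auto
qed

lemma Kn_atMost:
  assumes n: "n > 0"
  shows "\<bar>\<integral>x. Kn n x * indicator {..c} x \<partial>lborel\<bar> \<le> 1 / real n"
proof -
  define \<phi> where "\<phi> = (\<lambda>u v. max 0 (min v c - u))"
  let ?t = "\<lambda>i. cp n i * \<phi> (ca n i) (cp n i) - (1 - cp n i) * \<phi> (cp n i) (cb n i)"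
  have "(\<integral>x. Kn n x * indicator {..c} x \<partial>lborel) = (\<integral>x. (\<Sum>i<n. cp n i * indicator ({ca n i<..cp n i} \<inter> {..c}) x
      - (1 - cp n i) * indicator ({cp n i<..cb n i} \<inter> {..c}) x) \<partial>lborel)"
    unfolding Kn_def sum_distrib_right indicator_inter_arith
    by (intro Bochner_Integration.integral_cong refl sum.cong) (simp add: algebra_simps)
  also have "\<dots> = (\<Sum>i<n. (\<integral>x. cp n i * indicator ({ca n i<..cp n i} \<inter> {..c}) x
      - (1 - cp n i) * indicator ({cp n i<..cb n i} \<inter> {..c}) x \<partial>lborel))"
    by (rule Bochner_Integration.integral_sum) (use int_Ioc_atMost in auto)
  also have "\<dots> = (\<Sum>i<n. ?t i)"
  proof (rule sum.cong)
    fix i assume "i \<in> {..<n}"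
    then have i: "i < n" by simp
    have "(\<integral>x. cp n i * indicator ({ca n i<..cp n i} \<inter> {..c}) x
      - (1 - cp n i) * indicator ({cp n i<..cb n i} \<inter> {..c}) x \<partial>lborel) =
      cp n i * measure lborel ({ca n i<..cp n i} \<inter> {..c}) - (1 - cp n i) * measure lborel ({cp n i<..cb n i} \<inter> {..c})"
      using int_Ioc_atMost by (simp add: Bochner_Integration.integral_diff)
    also have "\<dots> = ?t i" using cell_order[OF i] by (simp add: meas_Ioc_atMost \<phi>_def)
    finally show "(\<integral>x. cp n i * indicator ({ca n i<..cp n i} \<inter> {..c}) x
      - (1 - cp n i) * indicator ({cp n i<..cb n i} \<inter> {..c}) x \<partial>lborel) = ?t i" .
  qed simp
  finally have eq: "(\<integral>x. Kn n x * indicator {..c} x \<partial>lborel) = (\<Sum>i<n. ?t i)" .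
  have "(\<Sum>i<n. \<bar>?t i\<bar>) \<le> 1 / real n"
  proof (rule card_le1_sum[where P = "\<lambda>i. ca n i < c \<and> c < cb n i"])
    fix i j assume ij: "i < n" "j < n" "ca n i < c \<and> c < cb n i" "ca n j < c \<and> c < cb n j"
    have nn: "real n > 0" using n by simp
    have "real i < c * n" "c * n < real i + 1" "real j < c * n" "c * n < real j + 1"
      using ij nn by (auto simp: ca_def cb_def field_simps)
    then have "real i < real j + 1" "real j < real i + 1" by linarith+
    then have "real i < real (Suc j)" "real j < real (Suc i)" by simp_all
    then have "i < Suc j" "j < Suc i" by (simp_all only: of_nat_less_iff)
    then show "i = j" by linarith
  next
    fix i assume i: "i < n" "\<not> (ca n i < c \<and> c < cb n i)"
    note co = cell_order[OF i(1)]
    show "?t i = 0"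
    proof (cases "c \<le> ca n i")
      case True
      then show ?thesis using co by (simp add: \<phi>_def)
    next
      case False
      then have "cb n i \<le> c" using i(2) by auto
      then have "\<phi> (ca n i) (cp n i) = cp n i - ca n i" "\<phi> (cp n i) (cb n i) = cb n i - cp n i"
        using co by (auto simp: \<phi>_def)
      then show ?thesis using cell_identity[OF i(1)] by simp
    qed
  next
    fix i assume i: "i < n"
    note co = cell_order[OF i]
    have p1: "0 \<le> \<phi> (ca n i) (cp n i)" "\<phi> (ca n i) (cp n i) \<le> cp n i - ca n i"
      using co by (auto simp: \<phi>_def)
    have p2: "0 \<le> \<phi> (cp n i) (cb n i)" "\<phi> (cp n i) (cb n i) \<le> cb n i - cp n i"
      using co by (auto simp: \<phi>_def)
    have "\<bar>?t i\<bar> \<le> cp n i * \<phi> (ca n i) (cp n i) + (1 - cp n i) * \<phi> (cp n i) (cb n i)"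
      using co p1 p2 by (simp add: abs_le_iff)
    also have "\<dots> \<le> \<phi> (ca n i) (cp n i) + \<phi> (cp n i) (cb n i)"
      using co p1 p2 by (intro add_mono mult_left_le_one_le) auto
    also have "\<dots> \<le> cb n i - ca n i" using p1 p2 by simp
    also have "\<dots> = 1 / real n" using co by simp
    finally show "\<bar>?t i\<bar> \<le> 1 / real n" .
  next
    show "0 \<le> 1 / real n" by simp
  qed
  then show ?thesis unfolding eq using sum_abs[of ?t "{..<n}"] by linarith
qed

lemma Kn_atMost_lim: "(\<lambda>n. \<integral>x. Kn n x * indicator {..c} x \<partial>lborel) \<longlonglongrightarrow> 0"
proof (rule Lim_null_comparison[OF _ lim_1_over_n])
  show "\<forall>\<^sub>F n in sequentially. norm (\<integral>x. Kn n x * indicator {..c} x \<partial>lborel) \<le> 1 / real n"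
    using eventually_gt_at_top[of 0] by eventually_elim (use Kn_atMost in auto)
qed

lemma sets_borel_atMost: "sets borel = sigma_sets (UNIV::real set) (range atMost)"
  by (subst borel_eq_atMost) (simp add: sets_measure_of)

lemma Kn_sets:
  assumes A: "A \<in> sets borel"
  shows "(\<lambda>n. \<integral>x. Kn n x * indicator A x \<partial>lborel) \<longlonglongrightarrow> 0"
proof -
  have univ: "(\<lambda>n. \<integral>x. Kn n x * indicator UNIV x \<partial>lborel) \<longlonglongrightarrow> 0"
  proof -
    have eq: "(\<integral>x. Kn n x * indicator UNIV x \<partial>lborel) = (\<integral>x. Kn n x * indicator {..1} x \<partial>lborel)" for n
    proof (rule Bochner_Integration.integral_cong[OF refl])
      fix x :: real
      show "Kn n x * indicator UNIV x = Kn n x * indicator {..1} x"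
      proof (cases "x \<le> 1")
        case True
        then show ?thesis by simp
      next
        case False
        then show ?thesis using Kn_zero_above[of x n] by simp
      qed
    qed
    show ?thesis unfolding eq by (rule Kn_atMost_lim)
  qed
  have ist: "Int_stable (range (atMost :: real \<Rightarrow> real set))" unfolding Int_stable_def
  proof (intro ballI)
    fix a b :: "real set" assume "a \<in> range atMost" "b \<in> range atMost"
    then obtain u v where "a = {..u}" "b = {..v}" by auto
    then have "a \<inter> b = {..min u v}" by auto
    then show "a \<inter> b \<in> range atMost" by blast
  qed
  have cl: "range (atMost :: real \<Rightarrow> real set) \<subseteq> Pow UNIV" by auto
  have "A \<in> sigma_sets UNIV (range atMost)" using A sets_borel_atMost by simp
  from ist cl this show ?thesis
  proof (induction rule: sigma_sets_induct_disjoint)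
    case (basic A)
    then obtain c where "A = {..c}" by auto
    then show ?case using Kn_atMost_lim[of c] by simp
  next
    case empty
    show ?case by simp
  next
    case (compl A)
    have Ab: "A \<in> sets borel" using compl(1) sets_borel_atMost by simp
    have "(\<integral>x. Kn n x * indicator (UNIV - A) x \<partial>lborel) =
        (\<integral>x. Kn n x * indicator UNIV x \<partial>lborel) - (\<integral>x. Kn n x * indicator A x \<partial>lborel)" for n
    proof -
      have "(\<integral>x. Kn n x * indicator (UNIV - A) x \<partial>lborel) =
          (\<integral>x. Kn n x * indicator UNIV x - Kn n x * indicator A x \<partial>lborel)"
        by (rule Bochner_Integration.integral_cong) (auto simp: indicator_def)
      also have "\<dots> = (\<integral>x. Kn n x * indicator UNIV x \<partial>lborel) - (\<integral>x. Kn n x * indicator A x \<partial>lborel)"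
        by (rule Bochner_Integration.integral_diff) (use Kn_ind_int Kn_int Ab in auto)
      finally show ?thesis .
    qed
    then show ?case using tendsto_diff[OF univ compl(2)] by simp
  next
    case (union A)
    have Ab: "\<And>i. A i \<in> sets borel" using union(2) sets_borel_atMost by auto
    define U where "U = \<Union>(range A)"
    define B where "B = (\<lambda>N. \<Union>(A ` {..<N}))"
    have Ub: "U \<in> sets borel" unfolding U_def using Ab by auto
    have Bb: "B N \<in> sets borel" for N unfolding B_def using Ab by auto
    have BU: "B N \<subseteq> U" for N unfolding B_def U_def by auto
    have split: "(\<integral>x. Kn n x * indicator (B N) x \<partial>lborel) = (\<Sum>i<N. \<integral>x. Kn n x * indicator (A i) x \<partial>lborel)" for n N
    proof -
      have dj: "disjoint_family_on A {..<N}" using union(1) disjoint_family_on_mono[of "{..<N}" UNIV A] by auto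
      have "(\<integral>x. Kn n x * indicator (B N) x \<partial>lborel) = (\<integral>x. (\<Sum>i<N. Kn n x * indicator (A i) x) \<partial>lborel)"
        unfolding B_def by (rule Bochner_Integration.integral_cong)
          (simp_all add: indicator_UN_disjoint[OF _ dj] sum_distrib_left)
      also have "\<dots> = (\<Sum>i<N. \<integral>x. Kn n x * indicator (A i) x \<partial>lborel)"
        by (rule Bochner_Integration.integral_sum) (use Kn_ind_int Ab in auto)
      finally show ?thesis .
    qed
    define t where "t = (\<lambda>N. (\<integral>x. indicator {0<..1} x * indicator U x \<partial>lborel)
        - (\<integral>x. indicator {0<..1} x * indicator (B N) x \<partial>lborel) :: real)"
    have i01: "integrable lborel (\<lambda>x. indicator {0<..1} x * indicator S x :: real)" if "S \<in> sets borel" for S :: "real set"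
      using integrable_real_mult_indicator[OF _ int_01, of S] that by simp
    have tb: "\<bar>(\<integral>x. Kn n x * indicator U x \<partial>lborel) - (\<integral>x. Kn n x * indicator (B N) x \<partial>lborel)\<bar> \<le> t N" for n N
    proof -
      have "(\<integral>x. Kn n x * indicator U x \<partial>lborel) - (\<integral>x. Kn n x * indicator (B N) x \<partial>lborel) =
          (\<integral>x. Kn n x * indicator U x - Kn n x * indicator (B N) x \<partial>lborel)"
        by (rule Bochner_Integration.integral_diff[symmetric]) (use Kn_ind_int Ub Bb in auto)
      also have "\<bar>\<dots>\<bar> \<le> (\<integral>x. \<bar>Kn n x * indicator U x - Kn n x * indicator (B N) x\<bar> \<partial>lborel)"
        by (rule integral_abs_bound)
      also have "\<dots> \<le> (\<integral>x. indicator {0<..1} x * indicator U x - indicator {0<..1} x * indicator (B N) x \<partial>lborel)"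
      proof (rule Bochner_Integration.integral_mono)
        show "integrable lborel (\<lambda>x. \<bar>Kn n x * indicator U x - Kn n x * indicator (B N) x\<bar>)"
          using Kn_ind_int Ub Bb by auto
        show "integrable lborel (\<lambda>x. indicator {0<..1} x * indicator U x - indicator {0<..1} x * indicator (B N) x :: real)"
          using i01 Ub Bb by auto
        fix x
        show "\<bar>Kn n x * indicator U x - Kn n x * indicator (B N) x\<bar> \<le>
            indicator {0<..1} x * indicator U x - indicator {0<..1} x * indicator (B N) x"
          using Kn_abs[of n x] BU[of N] by (auto simp: indicator_def)
      qed
      also have "\<dots> = t N" unfolding t_def
        by (rule Bochner_Integration.integral_diff) (use i01 Ub Bb in auto)
      finally show ?thesis .
    qed
    have tlim: "t \<longlonglongrightarrow> 0"
    proof -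
      have "(\<lambda>N. \<integral>x. indicator {0<..1} x * indicator (B N) x \<partial>lborel) \<longlonglongrightarrow>
          (\<integral>x. indicator {0<..1} x * indicator U x \<partial>lborel :: real)"
      proof (rule integral_dominated_convergence[where w = "indicator {0<..1} :: real \<Rightarrow> real"
          and s = "\<lambda>N x. indicator {0<..1} x * indicator (B N) x" and f = "\<lambda>x. indicator {0<..1} x * indicator U x"])
        show "(\<lambda>x. indicator {0<..1} x * indicator U x :: real) \<in> borel_measurable lborel" using Ub by measurable
        show "(\<lambda>x. indicator {0<..1} x * indicator (B N) x :: real) \<in> borel_measurable lborel" for N
          using Bb by measurable
        show "integrable lborel (indicator {0<..1} :: real \<Rightarrow> real)" by (rule int_01)
        show "AE x in lborel. norm (indicator {0<..1} x * indicator (B N) x :: real) \<le> indicator {0<..1} x" for N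
          by (rule AE_I2) (auto simp: indicator_def)
        show "AE x in lborel. (\<lambda>N. indicator {0<..1} x * indicator (B N) x :: real) \<longlonglongrightarrow> indicator {0<..1} x * indicator U x"
        proof (rule AE_I2)
          fix x
          show "(\<lambda>N. indicator {0<..1} x * indicator (B N) x :: real) \<longlonglongrightarrow> indicator {0<..1} x * indicator U x"
          proof (cases "x \<in> U")
            case True
            then obtain j where "x \<in> A j" by (auto simp: U_def)
            then have "\<forall>N\<ge>Suc j. x \<in> B N" by (auto simp: B_def)
            then have "\<forall>\<^sub>F N in sequentially. (indicator {0<..1} x * indicator (B N) x :: real) = indicator {0<..1} x * indicator U x"
              using True unfolding eventually_sequentially by (intro exI[of _ "Suc j"]) auto
            then show ?thesis by (rule tendsto_eventually)
          next
            case False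
            then have "x \<notin> B N" for N using BU by auto
            then show ?thesis using False by simp
          qed
        qed
      qed
      then have "(\<lambda>N. (\<integral>x. indicator {0<..1} x * indicator U x \<partial>lborel) - (\<integral>x. indicator {0<..1} x * indicator (B N) x \<partial>lborel))
          \<longlonglongrightarrow> (\<integral>x. indicator {0<..1} x * indicator U x \<partial>lborel) - (\<integral>x. indicator {0<..1} x * indicator U x \<partial>lborel :: real)"
        by (intro tendsto_diff tendsto_const)
      then show ?thesis by (simp add: t_def)
    qed
    show ?case unfolding U_def[symmetric]
    proof (rule LIMSEQ_I)
      fix r :: real assume r: "0 < r"
      obtain N where N: "\<bar>t N\<bar> < r / 2" using LIMSEQ_D[OF tlim, of "r/2"] r by auto
      have "(\<lambda>n. \<Sum>i<N. \<integral>x. Kn n x * indicator (A i) x \<partial>lborel) \<longlonglongrightarrow> 0"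
        by (rule tendsto_null_sum) (use union(3) in auto)
      moreover have r2: "r / 2 > 0" using r by simp
      ultimately obtain n0 where
        n0: "\<forall>n\<ge>n0. norm ((\<Sum>i<N. \<integral>x. Kn n x * indicator (A i) x \<partial>lborel) - 0) < r / 2"
        using LIMSEQ_D by blast
      have "\<bar>\<integral>x. Kn n x * indicator U x \<partial>lborel\<bar> < r" if "n \<ge> n0" for n
      proof -
        have "\<bar>\<Sum>i<N. \<integral>x. Kn n x * indicator (A i) x \<partial>lborel\<bar> < r / 2" using n0 that by simp
        then show ?thesis using tb[of n N] split[of n N] N by linarith
      qed
      then show "\<exists>no. \<forall>n\<ge>no. norm ((\<integral>x. Kn n x * indicator U x \<partial>lborel) - 0) < r" by auto
    qed
  qed
qed

lemma Kn_tendsto: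
  assumes G: "integrable lborel G"
  shows "(\<lambda>n. \<integral>x. Kn n x * G x \<partial>lborel) \<longlonglongrightarrow> 0"
  using G
proof (induction rule: integrable_induct)
  case (base A c)
  have Ab: "A \<in> sets borel" using base(1) by simp
  have "(\<integral>x. Kn n x * (indicator A x *\<^sub>R c) \<partial>lborel) = (\<integral>x. Kn n x * indicator A x \<partial>lborel) * c" for n
  proof -
    have "(\<integral>x. Kn n x * (indicator A x *\<^sub>R c) \<partial>lborel) = (\<integral>x. Kn n x * indicator A x * c \<partial>lborel)"
      by (simp add: mult.assoc)
    also have "\<dots> = (\<integral>x. Kn n x * indicator A x \<partial>lborel) * c"
      by (rule Bochner_Integration.integral_mult_left) (use Kn_ind_int Ab in auto)
    finally show ?thesis .
  qed
  then show ?case using tendsto_mult[OF Kn_sets[OF Ab] tendsto_const[of c]] by simp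
next
  case (add f g)
  have "(\<integral>x. Kn n x * (f x + g x) \<partial>lborel) = (\<integral>x. Kn n x * f x \<partial>lborel) + (\<integral>x. Kn n x * g x \<partial>lborel)" for n
  proof -
    have "(\<integral>x. Kn n x * (f x + g x) \<partial>lborel) = (\<integral>x. Kn n x * f x + Kn n x * g x \<partial>lborel)"
      by (simp add: distrib_left)
    also have "\<dots> = (\<integral>x. Kn n x * f x \<partial>lborel) + (\<integral>x. Kn n x * g x \<partial>lborel)"
      by (rule Bochner_Integration.integral_add) (use Kn_mult_int add in auto)
    finally show ?thesis .
  qed
  moreover have "(\<lambda>n. (\<integral>x. Kn n x * f x \<partial>lborel) + (\<integral>x. Kn n x * g x \<partial>lborel)) \<longlonglongrightarrow> 0 + 0"
    using add by (intro tendsto_add) auto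
  ultimately show ?case by simp
next
  case (lim f s)
  have conv: "\<And>x. (\<lambda>i. s i x) \<longlonglongrightarrow> f x" using lim by simp
  have bnd: "\<And>i x. norm (s i x) \<le> 2 * norm (f x)" using lim by simp
  have IH: "\<And>i. (\<lambda>n. \<integral>x. Kn n x * s i x \<partial>lborel) \<longlonglongrightarrow> 0" using lim by blast
  define d where "d = (\<lambda>i. \<integral>x. \<bar>s i x - f x\<bar> \<partial>lborel)"
  have dlim: "d \<longlonglongrightarrow> 0"
  proof -
    have p1: "(\<lambda>x::real. 0::real) \<in> borel_measurable lborel" by simp
    have p2: "(\<lambda>x. \<bar>s i x - f x\<bar>) \<in> borel_measurable lborel" for i using lim by measurable
    have intf: "integrable lborel f" using lim by blast
    have p3: "integrable lborel (\<lambda>x. 3 * \<bar>f x\<bar>)" using intf by auto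
    have p4: "AE x in lborel. (\<lambda>i. \<bar>s i x - f x\<bar>) \<longlonglongrightarrow> 0"
    proof (rule AE_I2)
      fix x
      have "(\<lambda>i. s i x - f x) \<longlonglongrightarrow> f x - f x" using conv[of x] by (intro tendsto_diff tendsto_const) auto
      then have "(\<lambda>i. s i x - f x) \<longlonglongrightarrow> 0" by simp
      then show "(\<lambda>i. \<bar>s i x - f x\<bar>) \<longlonglongrightarrow> 0" by (rule tendsto_rabs_zero)
    qed
    have p5: "AE x in lborel. norm \<bar>s i x - f x\<bar> \<le> 3 * \<bar>f x\<bar>" for i
    proof (rule AE_I2)
      fix x
      have "\<bar>s i x\<bar> \<le> 2 * \<bar>f x\<bar>" using bnd[of i x] by simp
      then show "norm \<bar>s i x - f x\<bar> \<le> 3 * \<bar>f x\<bar>" by simp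
    qed
    have "d \<longlonglongrightarrow> integral\<^sup>L (lborel :: real measure) (\<lambda>x. 0::real)"
      unfolding d_def by (rule integral_dominated_convergence[OF p1 p2 p3 p4 p5])
    then show ?thesis by simp
  qed
  have bound: "\<bar>(\<integral>x. Kn n x * f x \<partial>lborel) - (\<integral>x. Kn n x * s i x \<partial>lborel)\<bar> \<le> d i" for n i
  proof -
    have "(\<integral>x. Kn n x * f x \<partial>lborel) - (\<integral>x. Kn n x * s i x \<partial>lborel) = (\<integral>x. Kn n x * f x - Kn n x * s i x \<partial>lborel)"
      by (rule Bochner_Integration.integral_diff[symmetric]) (use Kn_mult_int lim in auto)
    also have "\<bar>\<dots>\<bar> \<le> (\<integral>x. \<bar>Kn n x * f x - Kn n x * s i x\<bar> \<partial>lborel)" by (rule integral_abs_bound)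
    also have "\<dots> \<le> d i" unfolding d_def
    proof (rule Bochner_Integration.integral_mono)
      show "integrable lborel (\<lambda>x. \<bar>Kn n x * f x - Kn n x * s i x\<bar>)" using Kn_mult_int lim by auto
      show "integrable lborel (\<lambda>x. \<bar>s i x - f x\<bar>)" using lim by auto
      fix x
      have k: "\<bar>Kn n x\<bar> \<le> 1" using Kn_abs[of n x] by (cases "x \<in> {0<..1}") auto
      have "\<bar>Kn n x * f x - Kn n x * s i x\<bar> = \<bar>Kn n x\<bar> * \<bar>s i x - f x\<bar>"
        by (simp add: right_diff_distrib[symmetric] abs_mult abs_minus_commute)
      also have "\<dots> \<le> \<bar>s i x - f x\<bar>" using k by (simp add: mult_left_le_one_le)
      finally show "\<bar>Kn n x * f x - Kn n x * s i x\<bar> \<le> \<bar>s i x - f x\<bar>" .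
    qed
    finally show ?thesis .
  qed
  show ?case
  proof (rule LIMSEQ_I)
    fix r :: real assume r: "0 < r"
    obtain i where i: "\<bar>d i\<bar> < r / 2" using LIMSEQ_D[OF dlim, of "r/2"] r by auto
    obtain n0 where n0: "\<And>n. n \<ge> n0 \<Longrightarrow> \<bar>\<integral>x. Kn n x * s i x \<partial>lborel\<bar> < r / 2"
      using LIMSEQ_D[OF IH[of i], of "r/2"] r by auto
    have "\<bar>\<integral>x. Kn n x * f x \<partial>lborel\<bar> < r" if "n \<ge> n0" for n
      using bound[of n i] n0[OF that] i by linarith
    then show "\<exists>no. \<forall>n\<ge>no. norm ((\<integral>x. Kn n x * f x \<partial>lborel) - 0) < r" by auto
  qed
qed

lemma riemann_x_Suc: "riemann_x f (Suc m) = (\<Sum>i<m. f (real (Suc i) / real (Suc m)))"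
proof -
  have "riemann_x f (Suc m) = (\<Sum>k\<in>{Suc 0..<Suc m}. f (real k / real (Suc m)))"
    by (simp add: riemann_x_def)
  also have "\<dots> = (\<Sum>i\<in>{0..<m}. f (real (Suc i) / real (Suc m)))"
    by (rule sum.shift_bounds_Suc_ivl)
  finally show ?thesis by (simp add: atLeast0LessThan)
qed

lemma y_identity:
  "riemann_x f (Suc (Suc m)) - riemann_x f (Suc m) =
     Rn f (Suc m) + (riemann_x f (Suc m) + f 0 + f 1) / real (Suc (Suc m))"
proof -
  define X where "X = riemann_x f (Suc m)"
  define g where "g = (\<lambda>i. f (real (Suc i) / real (Suc m)))"
  have X: "X = (\<Sum>i<m. g i)" unfolding X_def g_def by (rule riemann_x_Suc)
  have top: "riemann_x f (Suc (Suc m)) = (\<Sum>i<Suc m. f (cp (Suc m) i))"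
    unfolding riemann_x_Suc cp_def by simp
  have R: "Rn f (Suc m) = (\<Sum>i<Suc m. f (cp (Suc m) i)) - (\<Sum>i<Suc m. cp (Suc m) i * f (ca (Suc m) i))
      - (\<Sum>i<Suc m. (1 - cp (Suc m) i) * f (cb (Suc m) i))"
    unfolding Rn_def sum_subtractf[symmetric] by (rule sum.cong) (simp_all add: algebra_simps)
  have A: "(\<Sum>i<Suc m. cp (Suc m) i * f (ca (Suc m) i)) =
      f 0 / real (Suc (Suc m)) + (\<Sum>i<m. real (Suc (Suc i)) / real (Suc (Suc m)) * g i)"
    unfolding sum.lessThan_Suc_shift by (simp add: cp_def ca_def g_def)
  have B: "(\<Sum>i<Suc m. (1 - cp (Suc m) i) * f (cb (Suc m) i)) =
      (\<Sum>i<m. (1 - real (Suc i) / real (Suc (Suc m))) * g i) + f 1 / real (Suc (Suc m))"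
  proof -
    have "(1 - cp (Suc m) m) * f (cb (Suc m) m) = f 1 / real (Suc (Suc m))"
      by (simp add: cp_def cb_def field_simps)
    then show ?thesis unfolding sum.lessThan_Suc by (simp add: cp_def cb_def g_def)
  qed
  have C: "(\<Sum>i<m. real (Suc (Suc i)) / real (Suc (Suc m)) * g i) + (\<Sum>i<m. (1 - real (Suc i) / real (Suc (Suc m))) * g i)
      = X + X / real (Suc (Suc m))"
  proof -
    have "(\<Sum>i<m. real (Suc (Suc i)) / real (Suc (Suc m)) * g i) + (\<Sum>i<m. (1 - real (Suc i) / real (Suc (Suc m))) * g i)
        = (\<Sum>i<m. (1 + 1 / real (Suc (Suc m))) * g i)"
      unfolding sum.distrib[symmetric]
    proof (rule sum.cong)
      fix i assume "i \<in> {..<m}"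
      define D where "D = real (Suc (Suc m))"
      have D: "D > 0" by (simp add: D_def)
      have "real (Suc (Suc i)) / D * g i + (1 - real (Suc i) / D) * g i = (real (Suc (Suc i)) + D - real (Suc i)) / D * g i"
        using D by (simp add: field_simps)
      also have "(real (Suc (Suc i)) + D - real (Suc i)) / D = 1 + 1 / D"
        using D by (simp add: field_simps)
      finally show "real (Suc (Suc i)) / real (Suc (Suc m)) * g i + (1 - real (Suc i) / real (Suc (Suc m))) * g i =
          (1 + 1 / real (Suc (Suc m))) * g i" unfolding D_def .
    qed simp
    also have "\<dots> = (1 + 1 / real (Suc (Suc m))) * X" unfolding X by (simp add: sum_distrib_left)
    also have "\<dots> = X + X / real (Suc (Suc m))" by (simp add: field_simps)
    finally show ?thesis .
  qed
  have "riemann_x f (Suc (Suc m)) - riemann_x f (Suc m) = (\<Sum>i<Suc m. f (cp (Suc m) i)) - X"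
    using top X_def by simp
  also have "\<dots> = Rn f (Suc m) + (\<Sum>i<Suc m. cp (Suc m) i * f (ca (Suc m) i))
      + (\<Sum>i<Suc m. (1 - cp (Suc m) i) * f (cb (Suc m) i)) - X" using R by simp
  also have "\<dots> = Rn f (Suc m) + (X + f 0 + f 1) / real (Suc (Suc m))"
    using A B C by (simp add: add_divide_distrib)
  finally show ?thesis by (simp add: X_def)
qed

lemma ac_cont:
  assumes ac: "abs_continuous_on 0 1 f"
  shows "continuous_on {0..1} f"
  unfolding continuous_on_iff
proof (intro ballI allI impI)
  fix x e :: real assume x: "x \<in> {0..1}" and e: "0 < e"
  obtain d where d: "d > 0" "\<And>S. fam 0 1 S \<Longrightarrow> len S < d \<Longrightarrow> sv f S < e"
    using ac_set[OF ac e] by auto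
  have "dist (f x') (f x) < e" if x': "x' \<in> {0..1}" "dist x' x < d" for x'
  proof (cases x' x rule: linorder_cases)
    case less
    then have "sv f {(x', x)} < e" using d(2)[OF fam_single[of x' x]] x x' by (auto simp: len_single dist_real_def)
    then show ?thesis by (simp add: sv_def dist_real_def abs_minus_commute)
  next
    case equal
    then show ?thesis using e by simp
  next
    case greater
    then have "sv f {(x, x')} < e" using d(2)[OF fam_single[of x x']] x x' by (auto simp: len_single dist_real_def)
    then show ?thesis by (simp add: sv_def dist_real_def)
  qed
  then show "\<exists>d>0. \<forall>x'\<in>{0..1}. dist x' x < d \<longrightarrow> dist (f x') (f x) < e" using d(1) by blast
qed

lemma riemann_conv:
  fixes f :: "real \<Rightarrow> real"
  assumes cont: "continuous_on {0..1} f"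
  shows "(\<lambda>n. (\<Sum>i<n. f (real (Suc i) / real n)) / real n) \<longlonglongrightarrow> integral {0..1} f"
proof -
  have int: "f integrable_on {a..b}" if "0 \<le> a" "b \<le> 1" for a b
    using that by (intro integrable_continuous_interval continuous_on_subset[OF cont]) auto
  have split: "integral {0..1} f = (\<Sum>i<n. integral {real i / real n..real (Suc i) / real n} f)" if n: "n > 0" for n
  proof -
    have "k \<le> n \<Longrightarrow> integral {0..real k / real n} f = (\<Sum>i<k. integral {real i / real n..real (Suc i) / real n} f)" for k
    proof (induction k)
      case 0
      then show ?case by simp
    next
      case (Suc k)
      have le: "real k / real n \<le> real (Suc k) / real n" "real (Suc k) / real n \<le> 1"
        using Suc.prems n by (auto simp: divide_right_mono)
      have "integral {0..real (Suc k) / real n} f = integral {0..real k / real n} f + integral {real k / real n..real (Suc k) / real n} f"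
        by (rule Henstock_Kurzweil_Integration.integral_combine[symmetric]) (use le int in auto)
      then show ?case using Suc by simp
    qed
    from this[of n] show ?thesis using n by simp
  qed
  have uc: "uniformly_continuous_on {0..1} f" by (rule compact_uniformly_continuous[OF cont]) simp
  show ?thesis
  proof (rule LIMSEQ_I)
    fix r :: real assume r: "0 < r"
    obtain d where d: "d > 0" "\<And>x x'. x \<in> {0..1} \<Longrightarrow> x' \<in> {0..1} \<Longrightarrow> dist x' x < d \<Longrightarrow> dist (f x') (f x) < r / 2"
      using uc r unfolding uniformly_continuous_on_def by (metis half_gt_zero)
    obtain N :: nat where N: "1 / real N < d" "N > 0"
      by (metis d(1) gr0I inverse_eq_divide of_nat_0 real_arch_inverse)
    have "norm ((\<Sum>i<n. f (real (Suc i) / real n)) / real n - integral {0..1} f) < r" if nN: "n \<ge> N" for n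
    proof -
      have n: "n > 0" using nN N by simp
      have nd: "1 / real n < d" using N nN n by (smt (verit) frac_le of_nat_0_less_iff of_nat_mono)
      have cellb: "\<bar>f (real (Suc i) / real n) / real n - integral {real i / real n..real (Suc i) / real n} f\<bar> \<le> r / 2 / real n"
        if i: "i < n" for i
      proof -
        let ?a = "real i / real n" and ?b = "real (Suc i) / real n"
        have ab: "0 \<le> ?a" "?a \<le> ?b" "?b \<le> 1" using i n by (auto simp: divide_right_mono)
        have clen: "Henstock_Kurzweil_Integration.content {?a..?b} = 1 / real n" using ab by (simp add: diff_divide_distrib[symmetric])
        have "f ?b / real n = integral {?a..?b} (\<lambda>x. f ?b)" using clen by simp
        moreover have "integral {?a..?b} (\<lambda>x. f ?b - f x) = integral {?a..?b} (\<lambda>x. f ?b) - integral {?a..?b} f"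
          by (rule Henstock_Kurzweil_Integration.integral_diff) (use int[of ?a ?b] ab in auto)
        ultimately have "f ?b / real n - integral {?a..?b} f = integral {?a..?b} (\<lambda>x. f ?b - f x)"
          by simp
        also have "\<bar>\<dots>\<bar> \<le> r / 2 * Henstock_Kurzweil_Integration.content (cbox ?a ?b)"
        proof -
          have "norm (integral (cbox ?a ?b) (\<lambda>x. f ?b - f x)) \<le> r / 2 * Henstock_Kurzweil_Integration.content (cbox ?a ?b)"
          proof (rule integrable_bound)
            show "0 \<le> r / 2" using r by simp
            show "(\<lambda>x. f ?b - f x) integrable_on cbox ?a ?b" using int[of ?a ?b] ab by (auto intro: integrable_diff)
            fix x assume "x \<in> cbox ?a ?b"
            then have x: "?a \<le> x" "x \<le> ?b" by auto
            have "dist x ?b < d"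
            proof -
              have "dist x ?b \<le> ?b - ?a" using x by (simp add: dist_real_def)
              also have "\<dots> = 1 / real n" using clen ab by simp
              finally show ?thesis using nd by simp
            qed
            then have "dist (f x) (f ?b) < r / 2" using d(2)[of ?b x] x ab by auto
            then show "norm (f ?b - f x) \<le> r / 2" by (simp add: dist_real_def abs_minus_commute)
          qed
          then show ?thesis by simp
        qed
        also have "\<dots> = r / 2 / real n" using clen by simp
        finally show ?thesis .
      qed
      have "(\<Sum>i<n. f (real (Suc i) / real n)) / real n - integral {0..1} f =
          (\<Sum>i<n. f (real (Suc i) / real n) / real n - integral {real i / real n..real (Suc i) / real n} f)"
        using split[OF n] by (simp add: sum_subtractf sum_divide_distrib)
      also have "\<bar>\<dots>\<bar> \<le> (\<Sum>i<n. \<bar>f (real (Suc i) / real n) / real n - integral {real i / real n..real (Suc i) / real n} f\<bar>)"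
        by (rule sum_abs)
      also have "\<dots> \<le> (\<Sum>i<n. r / 2 / real n)" by (rule sum_mono) (use cellb in auto)
      also have "\<dots> = r / 2" using n by simp
      also have "\<dots> < r" using r by simp
      finally show ?thesis by simp
    qed
    then show "\<exists>no. \<forall>n\<ge>no. norm ((\<Sum>i<n. f (real (Suc i) / real n)) / real n - integral {0..1} f) < r" by blast
  qed
qed

theorem proposition1:
  fixes f :: "real \<Rightarrow> real"
  assumes "abs_continuous_on 0 1 f"
  shows "(\<lambda>n. riemann_x f (Suc n) - riemann_x f n) \<longlonglongrightarrow> integral {0..1} f"
proof -
  note ac = assms
  obtain G where G: "integrable lborel G"
    "\<And>a b. 0 \<le> a \<Longrightarrow> a \<le> b \<Longrightarrow> b \<le> 1 \<Longrightarrow> f b - f a = (\<integral>x. indicator {a<..b} x * G x \<partial>lborel)"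
    using f_density[OF ac] by blast
  have R: "(\<lambda>n. Rn f n) \<longlonglongrightarrow> 0"
    using Kn_tendsto[OF G(1)] Rn_integral[OF G(1) G(2)] by simp
  have contf: "continuous_on {0..1} f" by (rule ac_cont[OF ac])
  define S where "S = (\<lambda>n. (\<Sum>i<n. f (real (Suc i) / real n)) / real n)"
  have S: "S \<longlonglongrightarrow> integral {0..1} f" unfolding S_def by (rule riemann_conv[OF contf])
  have Q: "(\<lambda>n. (riemann_x f n + f 0 + f 1) / real (Suc n)) \<longlonglongrightarrow> integral {0..1} f"
  proof -
    have lim: "(\<lambda>n. S n * (real n / real (Suc n)) + f 0 / real (Suc n)) \<longlonglongrightarrow> integral {0..1} f * 1 + 0"
    proof (intro tendsto_add tendsto_mult S LIMSEQ_n_over_Suc_n)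
      show "(\<lambda>n. f 0 / real (Suc n)) \<longlonglongrightarrow> 0"
        using tendsto_mult[OF tendsto_const[of "f 0"] LIMSEQ_inverse_real_of_nat]
        by (simp add: divide_inverse)
    qed
    have ev: "\<forall>\<^sub>F n in sequentially. S n * (real n / real (Suc n)) + f 0 / real (Suc n) =
        (riemann_x f n + f 0 + f 1) / real (Suc n)"
    proof (rule eventually_sequentiallyI[of 1])
      fix n :: nat assume "1 \<le> n"
      then obtain m where m: "n = Suc m" by (cases n) auto
      have "riemann_x f n + f 1 = (\<Sum>i<n. f (real (Suc i) / real n))"
        unfolding m riemann_x_Suc by (simp add: sum.lessThan_Suc)
      moreover have "S n * (real n / real (Suc n)) = (\<Sum>i<n. f (real (Suc i) / real n)) / real (Suc n)"
        using m by (simp add: S_def)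
      ultimately show "S n * (real n / real (Suc n)) + f 0 / real (Suc n) =
          (riemann_x f n + f 0 + f 1) / real (Suc n)"
        by (simp add: add_divide_distrib[symmetric] algebra_simps)
    qed
    show ?thesis using Lim_transform_eventually[OF lim ev] by simp
  qed
  have Q': "(\<lambda>m. (riemann_x f (Suc m) + f 0 + f 1) / real (Suc (Suc m))) \<longlonglongrightarrow> integral {0..1} f"
    using LIMSEQ_Suc[OF Q] by simp
  have R': "(\<lambda>m. Rn f (Suc m)) \<longlonglongrightarrow> 0"
    using LIMSEQ_Suc[OF R] by simp
  have "(\<lambda>m. Rn f (Suc m) + (riemann_x f (Suc m) + f 0 + f 1) / real (Suc (Suc m))) \<longlonglongrightarrow> 0 + integral {0..1} f"
    by (rule tendsto_add[OF R' Q'])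
  then have "(\<lambda>m. riemann_x f (Suc (Suc m)) - riemann_x f (Suc m)) \<longlonglongrightarrow> integral {0..1} f"
    by (simp add: y_identity)
  then show ?thesis by (rule LIMSEQ_imp_Suc)
qed

end
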